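(* For every $f\in\hat\Lambda$, \[\mathcal{T}(f) = \mathrm{inv}\Delta\big(f \circ \operatorname{Exp}(p_1)\big) \circ \operatorname{Log}(1 + p_1). \]
   Context: $\hat\Lambda=\mathbb{Q}[\![p_1,p_2,\ldots]\!]$ is the ring of degree-completed symmetric functions. $\mathcal{T}:\hat\Lambda\to\hat\Lambda[\![x]\!]$ is the $\mathbb{Q}$-algebra homomorphism $p_n\mapsto(p_n+x^n)/(1-x^n)$. Plethysm $\circ$ is the operation characterized by: $f\mapsto f\circ h$ and $f\mapsto p_k\circ f$ are $\mathbb{Q}$-algebra homomorphisms and $p_k\circ f=f\circ p_k=f(p_k,p_{2k},\ldots)$; it is defined on $\hat\Lambda\times\hat\Lambda_+$ ($\hat\Lambda_+$ = zero constant term) and extended to $\hat\Lambda[\![x]\!]$ by $x\circ f=x$ and $p_n\circ x=x^n$. $\operatorname{Exp}(f)=\sum_{n>0}h_n\circ f$, with $h_n$ the complete homogeneous symmetric function (Frobenius characteristic of the trivial $\mathbb{S}_n$-representation), and $\operatorname{Log}(1+f)=\sum_{n\ge1}\frac{\mu(n)}{n}\log(1+p_n\circ f)$. The coproduct $\Delta:\hat\Lambda\to\mathbb{Q}[\![p_1,p_2,\ldots,q_1,q_2,\ldots]\!]$ is the algebra map $p_i\mapsto p_i+q_i$, and $\mathrm{inv}\Delta:\hat\Lambda\to\hat\Lambda[\![x]\!]$ is $\Delta$ followed by the algebra map $p_i\mapsto x^i$, $q_i\mapsto p_i$. *)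

theory Defs
  imports Complex_Main "HOL-Library.Multiset" "HOL-Computational_Algebra.Squarefree"
begin

text \<open>
  Elements of the ring Lambda-hat[[x]] (degree-completed symmetric functions in the power sums,
  with an extra formal variable x) are represented by their coefficient functions on monomials.
  A monomial is a multiset M of natural numbers: an occurrence of 0 stands for the variable x,
  an occurrence of n > 0 stands for the power sum p_n.
  Lambda-hat itself consists of those series whose coefficients vanish on monomials containing x.
\<close>

type_synonym sfx = "nat multiset \<Rightarrow> rat"

text \<open>Weight of a monomial: x has weight 1, p_n has weight n. Every coefficient of every
  series below only involves finitely many monomials of bounded weight.\<close>
definition wt :: "nat multiset \<Rightarrow> nat" where
  "wt M = sum_mset (image_mset (\<lambda>i. max i 1) M)"

definition sf_one :: sfx where
  "sf_one M = (if M = {#} then 1 else 0)"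

definition sf_var :: "nat \<Rightarrow> sfx" where
  "sf_var n M = (if M = {#n#} then 1 else 0)"

definition sf_add :: "sfx \<Rightarrow> sfx \<Rightarrow> sfx" where
  "sf_add f g M = f M + g M"

definition sf_smult :: "rat \<Rightarrow> sfx \<Rightarrow> sfx" where
  "sf_smult c f M = c * f M"

definition sf_mult :: "sfx \<Rightarrow> sfx \<Rightarrow> sfx" where
  "sf_mult f g M = (\<Sum>A\<in>{A. A \<subseteq># M}. f A * g (M - A))"

primrec sf_pow :: "sfx \<Rightarrow> nat \<Rightarrow> sfx" where
  "sf_pow f 0 = sf_one"
| "sf_pow f (Suc n) = sf_mult f (sf_pow f n)"

definition monprod :: "(nat \<Rightarrow> sfx) \<Rightarrow> nat multiset \<Rightarrow> sfx" where
  "monprod \<sigma> M = foldr sf_mult (map \<sigma> (sorted_list_of_multiset M)) sf_one"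

text \<open>The continuous Q-algebra homomorphism sending x to sigma 0 and p_n to sigma n.
  It is only used with substitutions where sigma i has no monomials of weight below max i 1,
  so truncating the sum at weight wt M' is exact.\<close>
definition subst :: "(nat \<Rightarrow> sfx) \<Rightarrow> sfx \<Rightarrow> sfx" where
  "subst \<sigma> f M' = (\<Sum>M\<in>{M. wt M \<le> wt M'}. f M * monprod \<sigma> M M')"

text \<open>p_k composed with g (k > 0): p_n maps to p_(kn), x maps to x^k.\<close>
definition pleth_p :: "nat \<Rightarrow> sfx \<Rightarrow> sfx" where
  "pleth_p k g = subst (\<lambda>i. if i = 0 then sf_pow (sf_var 0) k else sf_var (k * i)) g"

text \<open>Plethysm f o g (g with zero constant term): x maps to x, p_n maps to p_n o g.\<close>
definition sf_pleth :: "sfx \<Rightarrow> sfx \<Rightarrow> sfx" where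
  "sf_pleth f g = subst (\<lambda>i. if i = 0 then sf_var 0 else pleth_p i g) f"

text \<open>The map T: p_n maps to (p_n + x^n)/(1 - x^n) = (p_n + x^n) * sum_(j>=0) x^(nj).\<close>
definition T_img :: "nat \<Rightarrow> sfx" where
  "T_img n M = (let k = count M 0; R = filter_mset (\<lambda>i. i \<noteq> 0) M in
      if R = {#} \<and> n dvd k \<and> n \<le> k then 1
      else if R = {#n#} \<and> n dvd k then 1 else 0)"

definition sf_T :: "sfx \<Rightarrow> sfx" where
  "sf_T f = subst (\<lambda>i. if i = 0 then sf_var 0 else T_img i) f"

text \<open>invDelta: p_i maps to p_i + q_i, then p_i to x^i and q_i to p_i; i.e. p_i maps to x^i + p_i.\<close>
definition sf_invDelta :: "sfx \<Rightarrow> sfx" where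
  "sf_invDelta f = subst (\<lambda>i. if i = 0 then sf_var 0 else sf_add (sf_pow (sf_var 0) i) (sf_var i)) f"

text \<open>z_lambda = prod_i i^(m_i) m_i!, and h_n = sum over partitions lambda of n of p_lambda / z_lambda.\<close>
definition zee :: "nat multiset \<Rightarrow> rat" where
  "zee M = (\<Prod>i\<in>set_mset M. of_nat (i ^ count M i * fact (count M i)))"

definition sf_h :: "nat \<Rightarrow> sfx" where
  "sf_h n M = (if 0 \<notin># M \<and> sum_mset M = n then 1 / zee M else 0)"

text \<open>Exp(f) = sum_(n>0) h_n o f (f with zero constant term; h_n o f has weight >= n).\<close>
definition sf_Exp :: "sfx \<Rightarrow> sfx" where
  "sf_Exp f M' = (\<Sum>n\<in>{1..wt M'}. sf_pleth (sf_h n) f M')"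

definition moebius :: "nat \<Rightarrow> int" where
  "moebius n = (if n > 0 \<and> squarefree n then (-1) ^ card (prime_factors n) else 0)"

definition sf_log1p :: "sfx \<Rightarrow> sfx" where
  "sf_log1p g M' = (\<Sum>k\<in>{1..wt M'}. (-1) ^ (k + 1) / of_nat k * sf_pow g k M')"

definition sf_Log :: "sfx \<Rightarrow> sfx" where
  "sf_Log F M' = (let f = (\<lambda>M. F M - sf_one M) in
     (\<Sum>n\<in>{1..wt M'}. of_int (moebius n) / of_nat n * sf_log1p (pleth_p n f) M'))"

end

theory Submission
  imports Defs "HOL-Computational_Algebra.Formal_Power_Series"
begin

unbundle fps_syntax

lemma wt_empty[simp]: "wt {#} = 0" by (simp add: wt_def)
lemma wt_add[simp]: "wt (A + B) = wt A + wt B" by (simp add: wt_def)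
lemma wt_single[simp]: "wt {#i#} = max i 1" by (simp add: wt_def)
lemma wt_add_mset[simp]: "wt (add_mset i A) = max i 1 + wt A" by (simp add: wt_def)
lemma wt_mono: "A \<subseteq># B \<Longrightarrow> wt A \<le> wt B"
  by (metis le_add1 subset_mset.add_diff_inverse wt_add)
lemma wt_diff: "A \<subseteq># B \<Longrightarrow> wt (B - A) = wt B - wt A"
  by (metis add_diff_cancel_left' subset_mset.add_diff_inverse wt_add)
lemma size_le_wt: "size M \<le> wt M"
  by (induction M) auto
lemma elem_le_wt: "i \<in># M \<Longrightarrow> i \<le> wt M"
  by (induction M) auto
lemma wt_replicate[simp]: "wt (replicate_mset k i) = k * max i 1"
  by (induction k) auto

lemma finite_wt: "finite {M. wt M \<le> w}"
proof -
  have "{M. wt M \<le> w} \<subseteq> (\<Union>n\<le>w. multisets_of_size {0..w} n)"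
  proof
    fix M assume "M \<in> {M. wt M \<le> w}"
    hence "wt M \<le> w" by simp
    hence "size M \<le> w" "set_mset M \<subseteq> {0..w}" using size_le_wt[of M] elem_le_wt[of _ M] by force+
    thus "M \<in> (\<Union>n\<le>w. multisets_of_size {0..w} n)" unfolding multisets_of_size_def by blast
  qed
  moreover have "finite (\<Union>n\<le>w. multisets_of_size {0..w} n)"
    by (intro finite_UN_I) auto
  ultimately show ?thesis by (rule finite_subset)
qed

lemma finite_sub: "finite {A. A \<subseteq># M}"
proof -
  have "{A. A \<subseteq># M} \<subseteq> (\<Union>n\<le>size M. multisets_of_size (set_mset M) n)"
  proof
    fix A assume "A \<in> {A. A \<subseteq># M}"
    hence "A \<subseteq># M" by simp
    hence "size A \<le> size M" "set_mset A \<subseteq> set_mset M" by (auto simp: size_mset_mono dest: mset_subset_eqD)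
    thus "A \<in> (\<Union>n\<le>size M. multisets_of_size (set_mset M) n)" unfolding multisets_of_size_def by blast
  qed
  moreover have "finite (\<Union>n\<le>size M. multisets_of_size (set_mset M) n)"
    by (intro finite_UN_I) auto
  ultimately show ?thesis by (rule finite_subset)
qed

typedef ps = "UNIV :: (nat multiset \<Rightarrow> rat) set" morphisms cf Abs_ps by auto

lemma ps_eqI: "(\<And>M. cf f M = cf g M) \<Longrightarrow> f = g"
  by (metis cf_inject ext)

lemma cf_Abs[simp]: "cf (Abs_ps f) = f"
  by (simp add: Abs_ps_inverse)

lemma sum_sub_assoc:
  "(\<Sum>A\<in>{A. A \<subseteq># M}. \<Sum>B\<in>{B. B \<subseteq># A}. F B (A - B) (M - A)) =
   (\<Sum>B\<in>{B. B \<subseteq># M}. \<Sum>C\<in>{C. C \<subseteq># M - B}. F B C (M - B - C))"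
proof -
  have "(\<Sum>A\<in>{A. A \<subseteq># M}. \<Sum>B\<in>{B. B \<subseteq># A}. F B (A - B) (M - A)) =
        (\<Sum>(A,B)\<in>Sigma {A. A \<subseteq># M} (\<lambda>A. {B. B \<subseteq># A}). F B (A - B) (M - A))"
    by (rule sum.Sigma) (auto simp: finite_sub)
  also have "\<dots> = (\<Sum>(B,C)\<in>Sigma {B. B \<subseteq># M} (\<lambda>B. {C. C \<subseteq># M - B}). F B C (M - B - C))"
  proof (rule sum.reindex_bij_witness[where j = "\<lambda>(A,B). (B, A - B)" and i = "\<lambda>(B,C). (B + C, B)"])
    fix a assume "a \<in> Sigma {A. A \<subseteq># M} (\<lambda>A. {B. B \<subseteq># A})"
    then obtain A B where a: "a = (A,B)" "A \<subseteq># M" "B \<subseteq># A" by auto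
    show "(case case a of (A, B) \<Rightarrow> (B, A - B) of (B, C) \<Rightarrow> (B + C, B)) = a"
      using a by auto
    show "(case a of (A, B) \<Rightarrow> (B, A - B)) \<in> Sigma {B. B \<subseteq># M} (\<lambda>B. {C. C \<subseteq># M - B})"
      using a by (simp add: subseteq_mset_def) (meson diff_le_mono order_trans)
    show "(case case a of (A, B) \<Rightarrow> (B, A - B) of (B, C) \<Rightarrow> F B C (M - B - C)) =
          (case a of (A, B) \<Rightarrow> F B (A - B) (M - A))"
      using a by (auto simp: subseteq_mset_def multiset_eq_iff)
  next
    fix b assume "b \<in> Sigma {B. B \<subseteq># M} (\<lambda>B. {C. C \<subseteq># M - B})"
    then obtain B C where b: "b = (B,C)" "B \<subseteq># M" "C \<subseteq># M - B" by auto
    show "(case case b of (B, C) \<Rightarrow> (B + C, B) of (A, B) \<Rightarrow> (B, A - B)) = b"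
      using b by auto
    show "(case b of (B, C) \<Rightarrow> (B + C, B)) \<in> Sigma {A. A \<subseteq># M} (\<lambda>A. {B. B \<subseteq># A})"
      using b by (simp add: subseteq_mset_def) (metis add.commute le_diff_conv2)
  qed
  also have "\<dots> = (\<Sum>B\<in>{B. B \<subseteq># M}. \<Sum>C\<in>{C. C \<subseteq># M - B}. F B C (M - B - C))"
    by (rule sum.Sigma[symmetric]) (auto simp: finite_sub)
  finally show ?thesis .
qed

lemma sum_sub_flip:
  "(\<Sum>A\<in>{A. A \<subseteq># M}. F A (M - A)) = (\<Sum>A\<in>{A. A \<subseteq># M}. F (M - A) A)"
  by (rule sum.reindex_bij_witness[where i = "\<lambda>A. M - A" and j = "\<lambda>A. M - A"])
     (auto simp: subset_mset.diff_diff_right)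

lemma sum_sub_single:
  "(\<Sum>A\<in>{A. A \<subseteq># M}. (if A = {#} then c else 0) * F A) = c * (F {#} :: rat)"
proof -
  have "(\<Sum>A\<in>{A. A \<subseteq># M}. (if A = {#} then c else 0) * F A) =
        (\<Sum>A\<in>{A. A \<subseteq># M}. if A = {#} then c * F A else 0)"
    by (rule sum.cong) auto
  also have "\<dots> = c * F {#}" by (simp add: finite_sub)
  finally show ?thesis .
qed

instantiation ps :: comm_ring_1
begin
definition "zero_ps = Abs_ps (\<lambda>_. 0)"
definition "one_ps = Abs_ps sf_one"
definition "plus_ps f g = Abs_ps (\<lambda>M. cf f M + cf g M)"
definition "minus_ps f g = Abs_ps (\<lambda>M. cf f M - cf g M)"
definition "uminus_ps f = Abs_ps (\<lambda>M. - cf f M)"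
definition "times_ps f g = Abs_ps (sf_mult (cf f) (cf g))"

lemma cf_zero[simp]: "cf 0 M = 0" by (simp add: zero_ps_def)
lemma cf_one: "cf 1 M = (if M = {#} then 1 else 0)" by (simp add: one_ps_def sf_one_def)
lemma cf_plus[simp]: "cf (f + g) M = cf f M + cf g M" by (simp add: plus_ps_def)
lemma cf_minus[simp]: "cf (f - g) M = cf f M - cf g M" by (simp add: minus_ps_def)
lemma cf_uminus[simp]: "cf (- f) M = - cf f M" by (simp add: uminus_ps_def)
lemma cf_times: "cf (f * g) M = (\<Sum>A\<in>{A. A \<subseteq># M}. cf f A * cf g (M - A))"
  by (simp add: times_ps_def sf_mult_def)

instance
proof
  fix a b c :: ps
  show "a * b * c = a * (b * c)"
  proof (rule ps_eqI)
    fix M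
    have "cf (a * b * c) M = (\<Sum>A\<in>{A. A \<subseteq># M}. \<Sum>B\<in>{B. B \<subseteq># A}. cf a B * cf b (A - B) * cf c (M - A))"
      by (simp add: cf_times sum_distrib_right)
    also have "\<dots> = (\<Sum>B\<in>{B. B \<subseteq># M}. \<Sum>C\<in>{C. C \<subseteq># M - B}. cf a B * cf b C * cf c (M - B - C))"
      by (rule sum_sub_assoc[where F = "\<lambda>B C D. cf a B * cf b C * cf c D"])
    also have "\<dots> = cf (a * (b * c)) M"
      by (simp add: cf_times sum_distrib_left mult.assoc)
    finally show "cf (a * b * c) M = cf (a * (b * c)) M" .
  qed
  show "a * b = b * a"
    by (rule ps_eqI) (simp add: cf_times sum_sub_flip[where F = "\<lambda>A B. cf a A * cf b B"] mult.commute)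
  show "1 * a = a"
    by (rule ps_eqI) (simp add: cf_times cf_one sum_sub_single[where c = 1 and F = "\<lambda>A. cf a (_ - A)"])
  show "(a + b) * c = a * c + b * c"
    by (rule ps_eqI) (simp add: cf_times sum.distrib distrib_right)
  show "0 + a = a" by (rule ps_eqI) simp
  show "a + b + c = a + (b + c)" by (rule ps_eqI) simp
  show "a + b = b + a" by (rule ps_eqI) simp
  show "- a + a = 0" by (rule ps_eqI) simp
  show "a - b = a + - b" by (rule ps_eqI) simp
  show "(0::ps) \<noteq> 1"
  proof
    assume "(0::ps) = 1"
    hence "cf (0::ps) {#} = cf 1 {#}" by simp
    thus False by (simp add: cf_one)
  qed
qed
end


lemma cf_sum: "cf (sum F S) M = (\<Sum>i\<in>S. cf (F i) M)"
  by (induction S rule: infinite_finite_induct) auto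

lemma sum_sub_delta:
  "(\<Sum>A\<in>{A. A \<subseteq># M}. if A = N then g A else (0::rat)) = (if N \<subseteq># M then g N else 0)"
  by (simp add: finite_sub)

definition Var :: "nat \<Rightarrow> ps" where "Var j = Abs_ps (sf_var j)"

definition mono :: "nat multiset \<Rightarrow> ps" where "mono N = prod_mset (image_mset Var N)"

lemma cf_Var: "cf (Var j) M = (if M = {#j#} then 1 else 0)"
  by (simp add: Var_def sf_var_def)

lemma cf_Var_mult: "cf (Var j * f) M = (if j \<in># M then cf f (M - {#j#}) else 0)"
proof -
  have "cf (Var j * f) M = (\<Sum>A\<in>{A. A \<subseteq># M}. if A = {#j#} then cf f (M - A) else 0)"
    unfolding cf_times cf_Var by (rule sum.cong) auto
  also have "\<dots> = (if j \<in># M then cf f (M - {#j#}) else 0)"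
    by (subst sum_sub_delta) auto
  finally show ?thesis .
qed

lemma cf_mono_mult: "cf (mono N * f) M = (if N \<subseteq># M then cf f (M - N) else 0)"
proof (induction N arbitrary: M)
  case empty
  then show ?case by (simp add: mono_def)
next
  case (add j N)
  have "cf (mono (add_mset j N) * f) M = cf (Var j * (mono N * f)) M"
    by (simp add: mono_def mult.assoc)
  also have "\<dots> = (if j \<in># M then (if N \<subseteq># M - {#j#} then cf f (M - {#j#} - N) else 0) else 0)"
    by (simp add: cf_Var_mult add.IH)
  also have "\<dots> = (if add_mset j N \<subseteq># M then cf f (M - add_mset j N) else 0)"
    by (auto simp: insert_subset_eq_iff)
  finally show ?case .
qed

lemma cf_mono: "cf (mono N) M = (if M = N then 1 else 0)"
  using cf_mono_mult[of N 1 M] by (auto simp: cf_one subset_mset.le_iff_add)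

lemma Var_power: "Var j ^ k = mono (replicate_mset k j)"
  by (induction k) (auto simp: mono_def)

lemma cf_Var_power: "cf (Var j ^ k) M = (if M = replicate_mset k j then 1 else 0)"
  by (simp add: Var_power cf_mono)

lemma mono_add: "mono (A + B) = mono A * mono B"
  by (simp add: mono_def)

definition cst :: "rat \<Rightarrow> ps" where "cst q = Abs_ps (\<lambda>M. if M = {#} then q else 0)"

lemma cf_cst_mult: "cf (cst q * f) M = q * cf f M"
proof -
  have "cf (cst q * f) M = (\<Sum>A\<in>{A. A \<subseteq># M}. (if A = {#} then q else 0) * cf f (M - A))"
    by (simp add: cf_times cst_def)
  also have "\<dots> = q * cf f M" by (subst sum_sub_single) simp
  finally show ?thesis .
qed

lemma cf_cst: "cf (cst q) M = (if M = {#} then q else 0)" by (simp add: cst_def)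

lemma cst_1[simp]: "cst 1 = 1" by (rule ps_eqI) (simp add: cf_cst cf_one)

definition ordge :: "nat \<Rightarrow> ps \<Rightarrow> bool" where
  "ordge d f \<longleftrightarrow> (\<forall>M. wt M < d \<longrightarrow> cf f M = 0)"

lemma ordgeD: "ordge d f \<Longrightarrow> wt M < d \<Longrightarrow> cf f M = 0" by (simp add: ordge_def)
lemma ordge_0[simp]: "ordge d 0" by (simp add: ordge_def)
lemma ordge_zero[simp]: "ordge 0 f" by (simp add: ordge_def)
lemma ordge_mono: "ordge d f \<Longrightarrow> e \<le> d \<Longrightarrow> ordge e f" by (simp add: ordge_def)
lemma ordge_add: "ordge d f \<Longrightarrow> ordge d g \<Longrightarrow> ordge d (f + g)" by (simp add: ordge_def)
lemma ordge_diff: "ordge d f \<Longrightarrow> ordge d g \<Longrightarrow> ordge d (f - g)" by (simp add: ordge_def)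
lemma ordge_uminus: "ordge d f \<Longrightarrow> ordge d (- f)" by (simp add: ordge_def)
lemma ordge_sum: "(\<And>i. i \<in> S \<Longrightarrow> ordge d (F i)) \<Longrightarrow> ordge d (sum F S)"
  by (simp add: ordge_def cf_sum)
lemma ordge_cst_mult: "ordge d f \<Longrightarrow> ordge d (cst q * f)"
  by (simp add: ordge_def cf_cst_mult)

lemma ordge_mult: "ordge a f \<Longrightarrow> ordge b g \<Longrightarrow> ordge (a + b) (f * g)"
  unfolding ordge_def
proof (intro allI impI)
  fix M assume f: "\<forall>M. wt M < a \<longrightarrow> cf f M = 0" and g: "\<forall>M. wt M < b \<longrightarrow> cf g M = 0"
    and M: "wt M < a + b"
  have "cf f A * cf g (M - A) = 0" if "A \<subseteq># M" for A
  proof -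
    have "wt A + wt (M - A) = wt M" using that by (simp add: wt_diff wt_mono)
    hence "wt A < a \<or> wt (M - A) < b" using M by linarith
    thus ?thesis using f g by auto
  qed
  thus "cf (f * g) M = 0" unfolding cf_times by (intro sum.neutral) auto
qed

lemma ordge_mult_left: "ordge a f \<Longrightarrow> ordge a (f * g)"
  using ordge_mult[of a f 0 g] by simp
lemma ordge_mult_right: "ordge b g \<Longrightarrow> ordge b (f * g)"
  using ordge_mult[of 0 f b g] by simp

lemma ordge_power: "ordge d f \<Longrightarrow> ordge (k * d) (f ^ k)"
  by (induction k) (auto intro: ordge_mult)

lemma ordge_prod_mset:
  "(\<And>i. i \<in># N \<Longrightarrow> ordge (w i) (\<sigma> i)) \<Longrightarrow> ordge (\<Sum>i\<in>#N. w i) (prod_mset (image_mset \<sigma> N))"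
  by (induction N) (auto intro: ordge_mult)

lemma ordge_Var: "ordge (max j 1) (Var j)"
  by (auto simp: ordge_def cf_Var)

lemma ordge_mono_ps: "ordge (wt N) (mono N)"
  by (auto simp: ordge_def cf_mono)

definition eqw :: "nat \<Rightarrow> ps \<Rightarrow> ps \<Rightarrow> bool" where
  "eqw w f g \<longleftrightarrow> ordge (Suc w) (f - g)"

lemma eqwD: "eqw w f g \<Longrightarrow> wt M \<le> w \<Longrightarrow> cf f M = cf g M"
  by (auto simp: eqw_def ordge_def)
lemma eqwI: "(\<And>M. wt M \<le> w \<Longrightarrow> cf f M = cf g M) \<Longrightarrow> eqw w f g"
  by (auto simp: eqw_def ordge_def)
lemma eqw_refl[simp]: "eqw w f f" by (simp add: eqw_def)
lemma eqw_sym: "eqw w f g \<Longrightarrow> eqw w g f" by (auto simp: eqw_def ordge_def)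
lemma eqw_trans: "eqw w f g \<Longrightarrow> eqw w g h \<Longrightarrow> eqw w f h" by (auto simp: eqw_def ordge_def)
lemma eqw_add: "eqw w f f' \<Longrightarrow> eqw w g g' \<Longrightarrow> eqw w (f + g) (f' + g')"
  by (auto simp: eqw_def ordge_def)
lemma eqw_diff: "eqw w f f' \<Longrightarrow> eqw w g g' \<Longrightarrow> eqw w (f - g) (f' - g')"
  by (auto simp: eqw_def ordge_def)
lemma eqw_mult: "eqw w f f' \<Longrightarrow> eqw w g g' \<Longrightarrow> eqw w (f * g) (f' * g')"
proof -
  assume a: "eqw w f f'" "eqw w g g'"
  have "f * g - f' * g' = (f - f') * g + f' * (g - g')" by (simp add: algebra_simps)
  moreover have "ordge (Suc w) ((f - f') * g)" using a ordge_mult_left by (auto simp: eqw_def)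
  moreover have "ordge (Suc w) (f' * (g - g'))" using a ordge_mult_right by (auto simp: eqw_def)
  ultimately show ?thesis by (simp add: eqw_def ordge_add)
qed
lemma eqw_power: "eqw w f g \<Longrightarrow> eqw w (f ^ k) (g ^ k)"
  by (induction k) (auto intro: eqw_mult)
lemma eqw_sum: "(\<And>i. i \<in> S \<Longrightarrow> eqw w (F i) (G i)) \<Longrightarrow> eqw w (sum F S) (sum G S)"
  by (auto simp: eqw_def ordge_def cf_sum intro!: sum.cong)
lemma eqw_ordge: "ordge (Suc w) f \<Longrightarrow> eqw w f 0" by (simp add: eqw_def)
lemma ps_eq_eqw: "(\<And>w. eqw w f g) \<Longrightarrow> f = g"
  by (rule ps_eqI) (auto intro: eqwD)


definition mp :: "(nat \<Rightarrow> ps) \<Rightarrow> nat multiset \<Rightarrow> ps" where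
  "mp \<sigma> M = prod_mset (image_mset \<sigma> M)"

definition S :: "(nat \<Rightarrow> ps) \<Rightarrow> ps \<Rightarrow> ps" where
  "S \<sigma> f = Abs_ps (subst (\<lambda>i. cf (\<sigma> i)) (cf f))"

lemma mp_empty[simp]: "mp \<sigma> {#} = 1" by (simp add: mp_def)
lemma mp_add_mset[simp]: "mp \<sigma> (add_mset i M) = \<sigma> i * mp \<sigma> M" by (simp add: mp_def)
lemma mp_add: "mp \<sigma> (A + B) = mp \<sigma> A * mp \<sigma> B" by (simp add: mp_def)
lemma mp_single[simp]: "mp \<sigma> {#i#} = \<sigma> i" by (simp add: mp_def)
lemma mp_replicate: "mp \<sigma> (replicate_mset k i) = \<sigma> i ^ k" by (induction k) auto

lemma foldr_bridge:
  "foldr sf_mult (map (\<lambda>i. cf (\<sigma> i)) xs) sf_one = cf (prod_list (map \<sigma> xs))"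
proof (induction xs)
  case Nil
  then show ?case by (simp add: one_ps_def)
next
  case (Cons a xs)
  then show ?case by (simp add: times_ps_def)
qed

lemma monprod_bridge: "monprod (\<lambda>i. cf (\<sigma> i)) M = cf (mp \<sigma> M)"
proof -
  have "monprod (\<lambda>i. cf (\<sigma> i)) M = cf (prod_list (map \<sigma> (sorted_list_of_multiset M)))"
    by (simp add: monprod_def foldr_bridge[of \<sigma>, unfolded comp_def] o_def)
  also have "prod_list (map \<sigma> (sorted_list_of_multiset M)) = mp \<sigma> M"
    by (metis mp_def mset_map mset_sorted_list_of_multiset prod_mset_prod_list)
  finally show ?thesis .
qed

lemma cf_S: "cf (S \<sigma> f) M' = (\<Sum>M\<in>{M. wt M \<le> wt M'}. cf f M * cf (mp \<sigma> M) M')"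
  by (simp add: S_def subst_def monprod_bridge)

definition sgood :: "nat \<Rightarrow> (nat \<Rightarrow> ps) \<Rightarrow> bool" where
  "sgood c \<sigma> \<longleftrightarrow> (\<forall>i. ordge (c * max i 1) (\<sigma> i))"

abbreviation good :: "(nat \<Rightarrow> ps) \<Rightarrow> bool" where "good \<equiv> sgood 1"

lemma ordge_mp: "sgood c \<sigma> \<Longrightarrow> ordge (c * wt M) (mp \<sigma> M)"
proof (induction M)
  case empty
  then show ?case by simp
next
  case (add i M)
  have "ordge (c * max i 1 + c * wt M) (\<sigma> i * mp \<sigma> M)"
    using add by (intro ordge_mult) (auto simp: sgood_def)
  then show ?case by (simp add: algebra_simps)
qed

lemma ordge_mp1: "good \<sigma> \<Longrightarrow> ordge (wt M) (mp \<sigma> M)"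
  using ordge_mp[of 1 \<sigma> M] by simp

lemma cf_mp_zero: "good \<sigma> \<Longrightarrow> wt M' < wt M \<Longrightarrow> cf (mp \<sigma> M) M' = 0"
  using ordge_mp1 ordgeD by blast

lemma cf_S_gen:
  assumes "good \<sigma>" "finite W" "{M. wt M \<le> wt M'} \<subseteq> W"
  shows "cf (S \<sigma> f) M' = (\<Sum>M\<in>W. cf f M * cf (mp \<sigma> M) M')"
  unfolding cf_S
  by (rule sum.mono_neutral_left) (use assms cf_mp_zero in auto)

lemma S_ordge:
  assumes "sgood c \<sigma>" "ordge d f" shows "ordge (c * d) (S \<sigma> f)"
  unfolding ordge_def
proof (intro allI impI)
  fix M' assume M': "wt M' < c * d"
  have "cf f M * cf (mp \<sigma> M) M' = 0" for M
  proof (cases "wt M < d")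
    case True thus ?thesis using assms(2) by (simp add: ordgeD)
  next
    case False
    hence "c * d \<le> c * wt M" by simp
    hence "wt M' < c * wt M" using M' by linarith
    hence "cf (mp \<sigma> M) M' = 0" using ordge_mp[OF assms(1), of M] ordgeD by blast
    thus ?thesis by simp
  qed
  thus "cf (S \<sigma> f) M' = 0" unfolding cf_S by (intro sum.neutral) auto
qed

lemma S_ordge1: "good \<sigma> \<Longrightarrow> ordge d f \<Longrightarrow> ordge d (S \<sigma> f)"
  using S_ordge[of 1 \<sigma> d f] by simp

lemma S_add: "S \<sigma> (f + g) = S \<sigma> f + S \<sigma> g"
  by (rule ps_eqI) (simp add: cf_S sum.distrib distrib_right)
lemma S_diff: "S \<sigma> (f - g) = S \<sigma> f - S \<sigma> g"
  by (rule ps_eqI) (simp add: cf_S sum_subtractf left_diff_distrib)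
lemma S_uminus: "S \<sigma> (- f) = - S \<sigma> f"
  by (rule ps_eqI) (simp add: cf_S sum_negf)
lemma S_zero[simp]: "S \<sigma> 0 = 0"
  by (rule ps_eqI) (simp add: cf_S)
lemma S_sum: "S \<sigma> (sum F A) = (\<Sum>i\<in>A. S \<sigma> (F i))"
  by (induction A rule: infinite_finite_induct) (auto simp: S_add)
lemma S_cst_mult: "S \<sigma> (cst q * f) = cst q * S \<sigma> f"
  by (rule ps_eqI) (simp add: cf_S cf_cst_mult sum_distrib_left mult.assoc)

lemma S_one[simp]: "S \<sigma> 1 = 1"
proof (rule ps_eqI)
  fix M'
  have "cf (S \<sigma> 1) M' = (\<Sum>M\<in>{M. wt M \<le> wt M'}. if M = {#} then cf (mp \<sigma> M) M' else 0)"
    unfolding cf_S by (rule sum.cong) (auto simp: cf_one)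
  also have "\<dots> = cf 1 M'" by (simp add: finite_wt)
  finally show "cf (S \<sigma> 1) M' = cf 1 M'" .
qed

lemma S_cst[simp]: "S \<sigma> (cst q) = cst q"
  using S_cst_mult[of \<sigma> q 1] by simp

lemma S_Var: assumes "good \<sigma>" shows "S \<sigma> (Var j) = \<sigma> j"
proof (rule ps_eqI)
  fix M'
  have "cf (S \<sigma> (Var j)) M' = (\<Sum>M\<in>{M. wt M \<le> wt M'}. if M = {#j#} then cf (\<sigma> j) M' else 0)"
    unfolding cf_S by (rule sum.cong) (auto simp: cf_Var)
  also have "\<dots> = cf (\<sigma> j) M'"
    using assms by (auto simp: finite_wt sgood_def ordge_def)
  finally show "cf (S \<sigma> (Var j)) M' = cf (\<sigma> j) M'" .
qed

lemma S_mult: assumes g: "good \<sigma>" shows "S \<sigma> (f * g) = S \<sigma> f * S \<sigma> g"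
proof (rule ps_eqI)
  fix M'
  define W where "W = {M. wt M \<le> wt M'}"
  define X where "X N = cf (mp \<sigma> N) M'" for N
  have finW: "finite W" by (simp add: W_def finite_wt)
  have X0: "X N = 0" if "wt M' < wt N" for N using cf_mp_zero[OF g that] by (simp add: X_def)
  have R: "cf (S \<sigma> f * S \<sigma> g) M' = (\<Sum>A\<in>W. \<Sum>B\<in>W. cf f A * cf g B * X (A + B))"
  proof -
    have sub: "{M. wt M \<le> wt C} \<subseteq> W" "{M. wt M \<le> wt (M' - C)} \<subseteq> W" if "C \<subseteq># M'" for C
      using that wt_mono[of C M'] wt_mono[of "M' - C" M'] by (auto simp: W_def)
    have "cf (S \<sigma> f * S \<sigma> g) M' = (\<Sum>C\<in>{C. C \<subseteq># M'}. cf (S \<sigma> f) C * cf (S \<sigma> g) (M' - C))"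
      by (rule cf_times)
    also have "\<dots> = (\<Sum>C\<in>{C. C \<subseteq># M'}. (\<Sum>A\<in>W. cf f A * cf (mp \<sigma> A) C) *
                                          (\<Sum>B\<in>W. cf g B * cf (mp \<sigma> B) (M' - C)))"
      by (rule sum.cong[OF refl]) (use cf_S_gen[OF g finW] sub in auto)
    also have "\<dots> = (\<Sum>C\<in>{C. C \<subseteq># M'}. \<Sum>A\<in>W. \<Sum>B\<in>W.
                       cf f A * cf g B * (cf (mp \<sigma> A) C * cf (mp \<sigma> B) (M' - C)))"
      by (simp add: sum_product ac_simps)
    also have "\<dots> = (\<Sum>A\<in>W. \<Sum>B\<in>W. \<Sum>C\<in>{C. C \<subseteq># M'}.
                       cf f A * cf g B * (cf (mp \<sigma> A) C * cf (mp \<sigma> B) (M' - C)))"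
      by (subst sum.swap) (rule sum.cong[OF refl], rule sum.swap)
    also have "\<dots> = (\<Sum>A\<in>W. \<Sum>B\<in>W. cf f A * cf g B * X (A + B))"
      by (simp add: X_def mp_add cf_times sum_distrib_left)
    finally show ?thesis .
  qed
  have L: "cf (S \<sigma> (f * g)) M' = (\<Sum>A\<in>W. \<Sum>B\<in>W. cf f A * cf g B * X (A + B))"
  proof -
    have "cf (S \<sigma> (f * g)) M' = (\<Sum>N\<in>W. \<Sum>A\<in>{A. A \<subseteq># N}. cf f A * cf g (N - A) * X N)"
      by (simp add: cf_S cf_times sum_distrib_right W_def X_def)
    also have "\<dots> = (\<Sum>(N,A)\<in>Sigma W (\<lambda>N. {A. A \<subseteq># N}). cf f A * cf g (N - A) * X N)"
      by (rule sum.Sigma) (auto simp: finW finite_sub)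
    also have "\<dots> = (\<Sum>(A,B)\<in>{(A,B). A \<in> W \<and> B \<in> W \<and> wt (A + B) \<le> wt M'}. cf f A * cf g B * X (A + B))"
    proof (rule sum.reindex_bij_witness[where j = "\<lambda>(N,A). (A, N - A)" and i = "\<lambda>(A,B). (A + B, A)"])
      fix a assume "a \<in> Sigma W (\<lambda>N. {A. A \<subseteq># N})"
      then obtain N A where a: "a = (N,A)" "N \<in> W" "A \<subseteq># N" by auto
      have "wt A \<le> wt N" "wt (N - A) \<le> wt N" "wt A + wt (N - A) = wt N"
        using a wt_mono[of A N] wt_mono[of "N - A" N] wt_diff[of A N] by auto
      thus "(case case a of (N, A) \<Rightarrow> (A, N - A) of (A, B) \<Rightarrow> (A + B, A)) = a"
           "(case a of (N, A) \<Rightarrow> (A, N - A)) \<in> {(A, B). A \<in> W \<and> B \<in> W \<and> wt (A + B) \<le> wt M'}"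
           "(case case a of (N, A) \<Rightarrow> (A, N - A) of (A, B) \<Rightarrow> cf f A * cf g B * X (A + B)) =
            (case a of (N, A) \<Rightarrow> cf f A * cf g (N - A) * X N)"
        using a by (auto simp: W_def)
    next
      fix b assume "b \<in> {(A, B). A \<in> W \<and> B \<in> W \<and> wt (A + B) \<le> wt M'}"
      then obtain A B where b: "b = (A,B)" "wt (A + B) \<le> wt M'" by auto
      thus "(case case b of (A, B) \<Rightarrow> (A + B, A) of (N, A) \<Rightarrow> (A, N - A)) = b"
           "(case b of (A, B) \<Rightarrow> (A + B, A)) \<in> Sigma W (\<lambda>N. {A. A \<subseteq># N})"
        by (auto simp: W_def)
    qed
    also have "\<dots> = (\<Sum>(A,B)\<in>W \<times> W. cf f A * cf g B * X (A + B))"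
      by (rule sum.mono_neutral_left) (use finW X0 in force)+
    also have "\<dots> = (\<Sum>A\<in>W. \<Sum>B\<in>W. cf f A * cf g B * X (A + B))"
      by (rule sum.cartesian_product[symmetric])
    finally show ?thesis .
  qed
  show "cf (S \<sigma> (f * g)) M' = cf (S \<sigma> f * S \<sigma> g) M'" using L R by simp
qed

lemma S_power: "good \<sigma> \<Longrightarrow> S \<sigma> (f ^ k) = S \<sigma> f ^ k"
  by (induction k) (auto simp: S_mult)

lemma S_mp: "good \<sigma> \<Longrightarrow> S \<sigma> (mp \<tau> M) = mp (\<lambda>i. S \<sigma> (\<tau> i)) M"
  by (induction M) (auto simp: S_mult)

lemma S_comp:
  assumes g: "good \<sigma>" and t: "good \<tau>"
  shows "S \<sigma> (S \<tau> f) = S (\<lambda>i. S \<sigma> (\<tau> i)) f"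
proof (rule ps_eqI)
  fix M''
  define W where "W = {M. wt M \<le> wt M''}"
  have finW: "finite W" by (simp add: W_def finite_wt)
  have "cf (S \<sigma> (S \<tau> f)) M'' = (\<Sum>N\<in>W. cf (S \<tau> f) N * cf (mp \<sigma> N) M'')"
    by (simp add: cf_S W_def)
  also have "\<dots> = (\<Sum>N\<in>W. (\<Sum>M\<in>W. cf f M * cf (mp \<tau> M) N) * cf (mp \<sigma> N) M'')"
    by (rule sum.cong[OF refl], subst cf_S_gen[OF t finW]) (auto simp: W_def)
  also have "\<dots> = (\<Sum>M\<in>W. cf f M * (\<Sum>N\<in>W. cf (mp \<tau> M) N * cf (mp \<sigma> N) M''))"
    by (simp add: sum_distrib_left sum_distrib_right mult.assoc) (rule sum.swap)
  also have "\<dots> = (\<Sum>M\<in>W. cf f M * cf (S \<sigma> (mp \<tau> M)) M'')"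
    by (simp add: cf_S W_def)
  also have "\<dots> = cf (S (\<lambda>i. S \<sigma> (\<tau> i)) f) M''"
    by (simp add: S_mp[OF g] cf_S W_def)
  finally show "cf (S \<sigma> (S \<tau> f)) M'' = cf (S (\<lambda>i. S \<sigma> (\<tau> i)) f) M''" .
qed

lemma good_comp: "good \<sigma> \<Longrightarrow> sgood c \<tau> \<Longrightarrow> sgood c (\<lambda>i. S \<sigma> (\<tau> i))"
  by (auto simp: sgood_def intro: S_ordge1)

lemma S_mono: "good \<sigma> \<Longrightarrow> S \<sigma> (mono M) = mp \<sigma> M"
  by (simp add: mono_def S_mp[unfolded mp_def] S_Var mp_def)

lemma S_cong:
  assumes "\<And>M i. cf f M \<noteq> 0 \<Longrightarrow> i \<in># M \<Longrightarrow> \<sigma> i = \<tau> i"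
  shows "S \<sigma> f = S \<tau> f"
proof (rule ps_eqI)
  fix M'
  have "cf f M * cf (mp \<sigma> M) M' = cf f M * cf (mp \<tau> M) M'" for M
  proof (cases "cf f M = 0")
    case False
    hence "image_mset \<sigma> M = image_mset \<tau> M" using assms by (intro image_mset_cong) auto
    thus ?thesis by (simp add: mp_def)
  qed simp
  thus "cf (S \<sigma> f) M' = cf (S \<tau> f) M'" unfolding cf_S by (rule sum.cong[OF refl])
qed

lemma S_id: "S Var f = f"
proof (rule ps_eqI)
  fix M'
  have "cf (S Var f) M' = (\<Sum>M\<in>{M. wt M \<le> wt M'}. if M = M' then cf f M else 0)"
    unfolding cf_S by (rule sum.cong) (auto simp: mp_def cf_mono[unfolded mono_def])
  also have "\<dots> = cf f M'" by (simp add: finite_wt)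
  finally show "cf (S Var f) M' = cf f M'" .
qed

lemma S_eqw: assumes "eqw w f g" shows "eqw w (S \<sigma> f) (S \<sigma> g)"
proof (rule eqwI)
  fix M' assume M': "wt M' \<le> w"
  show "cf (S \<sigma> f) M' = cf (S \<sigma> g) M'"
    unfolding cf_S by (rule sum.cong[OF refl]) (use M' eqwD[OF assms] in force)
qed

lemma good_Var: "good Var"
  unfolding sgood_def by (metis mult_1 ordge_Var)


lemma set_sub_single: "set_mset M \<subseteq> {v} \<longleftrightarrow> M = replicate_mset (size M) v"
proof
  assume "set_mset M \<subseteq> {v}"
  thus "M = replicate_mset (size M) v"
  proof (induction M)
    case (add x M)
    hence "x = v" "M = replicate_mset (size M) v" by auto
    then show ?case by simp
  qed simp
next
  assume h: "M = replicate_mset (size M) v"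
  show "set_mset M \<subseteq> {v}"
  proof
    fix x assume "x \<in># M"
    hence "x \<in># replicate_mset (size M) v" using h by metis
    thus "x \<in> {v}" by (simp split: if_splits)
  qed
qed

lemma sub_replicate: "A \<subseteq># replicate_mset n v \<longleftrightarrow> (\<exists>k\<le>n. A = replicate_mset k v)"
proof
  assume a: "A \<subseteq># replicate_mset n v"
  hence "set_mset A \<subseteq> {v}"
    by (metis mset_subset_eqD set_mset_replicate_mset_subset singletonD subsetI empty_iff)
  hence "A = replicate_mset (size A) v" by (simp add: set_sub_single)
  moreover have "size A \<le> n" using size_mset_mono[OF a] by simp
  ultimately show "\<exists>k\<le>n. A = replicate_mset k v" by blast
next
  assume "\<exists>k\<le>n. A = replicate_mset k v"
  thus "A \<subseteq># replicate_mset n v" by (auto simp: subseteq_mset_def)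
qed

lemma sub_replicate_set: "{A. A \<subseteq># replicate_mset n v} = (\<lambda>k. replicate_mset k v) ` {0..n}"
  unfolding set_eq_iff by (auto simp: sub_replicate)

lemma inj_replicate: "inj_on (\<lambda>k. replicate_mset k v) A"
  by (rule inj_onI) (metis size_replicate_mset)

definition emb :: "rat fps \<Rightarrow> ps" where
  "emb F = Abs_ps (\<lambda>M. if set_mset M \<subseteq> {1} then F $ size M else 0)"

lemma cf_emb: "cf (emb F) M = (if set_mset M \<subseteq> {1} then F $ size M else 0)"
  by (simp add: emb_def)

lemma emb_add: "emb (F + G) = emb F + emb G"
  by (rule ps_eqI) (simp add: cf_emb)

lemma emb_one: "emb 1 = 1"
  by (rule ps_eqI) (auto simp: cf_emb cf_one)

lemma emb_X: "emb fps_X = Var 1"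
proof (rule ps_eqI)
  fix M
  show "cf (emb fps_X) M = cf (Var 1) M"
  proof (cases "set_mset M \<subseteq> {1}")
    case True
    hence "M = replicate_mset (size M) 1" by (simp add: set_sub_single)
    then show ?thesis using True
      by (auto simp: cf_emb cf_Var fps_X_def)
  next
    case False
    then show ?thesis by (auto simp: cf_emb cf_Var)
  qed
qed

lemma emb_mult: "emb (F * G) = emb F * emb G"
proof (rule ps_eqI)
  fix M
  show "cf (emb (F * G)) M = cf (emb F * emb G) M"
  proof (cases "set_mset M \<subseteq> {1}")
    case True
    define n where "n = size M"
    have M: "M = replicate_mset n 1" using True by (simp add: set_sub_single n_def)
    have "cf (emb F * emb G) M = (\<Sum>A\<in>(\<lambda>k. replicate_mset k 1) ` {0..n}. cf (emb F) A * cf (emb G) (M - A))"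
      by (simp add: cf_times M sub_replicate_set)
    also have "\<dots> = (\<Sum>k\<in>{0..n}. cf (emb F) (replicate_mset k 1) * cf (emb G) (M - replicate_mset k 1))"
      by (subst sum.reindex) (auto simp: inj_replicate)
    also have "\<dots> = (\<Sum>k\<in>{0..n}. F $ k * G $ (n - k))"
    proof (rule sum.cong[OF refl])
      fix k assume "k \<in> {0..n}"
      hence "M - replicate_mset k 1 = replicate_mset (n - k) 1"
        by (simp add: M multiset_eq_iff)
      thus "cf (emb F) (replicate_mset k 1) * cf (emb G) (M - replicate_mset k 1) = F $ k * G $ (n - k)"
        by (simp add: cf_emb)
    qed
    also have "\<dots> = cf (emb (F * G)) M"
      using True by (simp add: cf_emb fps_mult_nth n_def)
    finally show ?thesis by simp
  next
    case False
    have "cf (emb F) A * cf (emb G) (M - A) = 0" if "A \<subseteq># M" for A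
    proof -
      have "\<not> (set_mset A \<subseteq> {1} \<and> set_mset (M - A) \<subseteq> {1})"
        using False that by (metis set_mset_union subset_mset.add_diff_inverse Un_least)
      thus ?thesis by (auto simp: cf_emb)
    qed
    hence "cf (emb F * emb G) M = 0" unfolding cf_times by (intro sum.neutral) auto
    thus ?thesis using False by (simp add: cf_emb)
  qed
qed

lemma emb_power: "emb (F ^ k) = emb F ^ k"
  by (induction k) (auto simp: emb_one emb_mult)

lemma wt_eq_0: "wt M = 0 \<longleftrightarrow> M = {#}"
  using size_le_wt[of M] by auto

lemma ordge_emb: "F $ 0 = 0 \<Longrightarrow> ordge 1 (emb F)"
  by (auto simp: ordge_def cf_emb wt_eq_0)

definition sig1 :: "ps \<Rightarrow> nat \<Rightarrow> ps" where "sig1 g = (\<lambda>j. if j = 1 then g else 0)"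

lemma good_sig1: "ordge 1 g \<Longrightarrow> good (sig1 g)"
  by (auto simp: sgood_def sig1_def)

definition ev :: "ps \<Rightarrow> rat fps \<Rightarrow> ps" where "ev g F = S (sig1 g) (emb F)"

lemma cf_ev:
  assumes "ordge 1 g"
  shows "cf (ev g F) M' = (\<Sum>k\<le>wt M'. F $ k * cf (g ^ k) M')"
proof -
  define w where "w = wt M'"
  have "cf (ev g F) M' = (\<Sum>M\<in>{M. wt M \<le> w}. cf (emb F) M * cf (mp (sig1 g) M) M')"
    by (simp add: ev_def cf_S w_def)
  also have "\<dots> = (\<Sum>M\<in>(\<lambda>k. replicate_mset k 1) ` {..w}. cf (emb F) M * cf (mp (sig1 g) M) M')"
  proof (rule sum.mono_neutral_right)
    show "finite {M. wt M \<le> w}" by (rule finite_wt)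
    show "(\<lambda>k. replicate_mset k 1) ` {..w} \<subseteq> {M. wt M \<le> w}" by auto
    show "\<forall>M\<in>{M. wt M \<le> w} - (\<lambda>k. replicate_mset k 1) ` {..w}. cf (emb F) M * cf (mp (sig1 g) M) M' = 0"
    proof
      fix M assume M: "M \<in> {M. wt M \<le> w} - (\<lambda>k. replicate_mset k 1) ` {..w}"
      show "cf (emb F) M * cf (mp (sig1 g) M) M' = 0"
      proof (cases "set_mset M \<subseteq> {1}")
        case True
        hence "M = replicate_mset (size M) 1" by (simp add: set_sub_single)
        moreover have "size M \<le> w" using M size_le_wt[of M] by auto
        ultimately have False using M by (metis atMost_iff image_eqI DiffD2)
        thus ?thesis ..
      qed (simp add: cf_emb)
    qed
  qed
  also have "\<dots> = (\<Sum>k\<le>w. cf (emb F) (replicate_mset k 1) * cf (mp (sig1 g) (replicate_mset k 1)) M')"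
    by (subst sum.reindex) (auto simp: inj_replicate)
  also have "\<dots> = (\<Sum>k\<le>w. F $ k * cf (g ^ k) M')"
    by (intro sum.cong refl) (auto simp: cf_emb mp_replicate sig1_def)
  finally show ?thesis by (simp add: w_def)
qed

lemma emb_compose:
  assumes G0: "G $ 0 = 0"
  shows "emb (F oo G) = S (sig1 (emb G)) (emb F)"
proof (rule ps_eqI)
  fix M'
  have o: "ordge 1 (emb G)" using G0 by (rule ordge_emb)
  have "cf (S (sig1 (emb G)) (emb F)) M' = (\<Sum>k\<le>wt M'. F $ k * cf (emb (G ^ k)) M')"
    using cf_ev[OF o, of F M'] by (simp add: ev_def emb_power)
  also have "\<dots> = cf (emb (F oo G)) M'"
  proof (cases "set_mset M' \<subseteq> {1}")
    case True
    hence "wt M' = size M'" by (metis set_sub_single wt_replicate max_def mult.right_neutral le_refl)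
    thus ?thesis using True by (simp add: cf_emb fps_compose_nth atLeast0AtMost)
  next
    case False
    thus ?thesis by (simp add: cf_emb)
  qed
  finally show "cf (emb (F oo G)) M' = cf (S (sig1 (emb G)) (emb F)) M'" by simp
qed

lemma ev_compose:
  assumes g: "ordge 1 g" and G0: "G $ 0 = 0"
  shows "ev g (F oo G) = ev (ev g G) F"
proof -
  have "ev g (F oo G) = S (sig1 g) (S (sig1 (emb G)) (emb F))"
    by (simp add: ev_def emb_compose[OF G0])
  also have "\<dots> = S (\<lambda>i. S (sig1 g) (sig1 (emb G) i)) (emb F)"
    by (rule S_comp[OF good_sig1[OF g] good_sig1[OF ordge_emb[OF G0]]])
  also have "(\<lambda>i. S (sig1 g) (sig1 (emb G) i)) = sig1 (ev g G)"
    by (auto simp: sig1_def ev_def)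
  finally show ?thesis by (simp add: ev_def)
qed

lemma ev_1X: assumes g: "ordge 1 g" shows "ev g (1 + fps_X) = 1 + g"
proof -
  have gs: "good (sig1 g)" by (rule good_sig1[OF g])
  show ?thesis by (simp add: ev_def emb_add emb_one emb_X S_add S_Var[OF gs]) (simp add: sig1_def)
qed

lemma ordge_ev: "ordge 1 g \<Longrightarrow> F $ 0 = 0 \<Longrightarrow> ordge 1 (ev g F)"
  unfolding ev_def by (rule S_ordge1[OF good_sig1 ordge_emb])

lemma S_ev: "good \<sigma> \<Longrightarrow> ordge 1 g \<Longrightarrow> S \<sigma> (ev g F) = ev (S \<sigma> g) F"
proof -
  assume s: "good \<sigma>" and g: "ordge 1 g"
  have "S \<sigma> (ev g F) = S (\<lambda>i. S \<sigma> (sig1 g i)) (emb F)"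
    unfolding ev_def by (rule S_comp[OF s good_sig1[OF g]])
  also have "(\<lambda>i. S \<sigma> (sig1 g i)) = sig1 (S \<sigma> g)" by (auto simp: sig1_def)
  finally show ?thesis by (simp add: ev_def)
qed

lemma exp_ln: "fps_exp (1::rat) oo fps_ln 1 = 1 + fps_X"
proof -
  have "(fps_exp (1::rat) - 1) oo fps_ln 1 = fps_X"
    by (simp add: fps_ln_fps_exp_inv fps_inv_right)
  hence "(fps_exp (1::rat) oo fps_ln 1) - 1 = fps_X" by (simp add: fps_compose_sub_distrib)
  thus ?thesis by (metis add.commute diff_eq_eq)
qed

definition pexp :: "ps \<Rightarrow> ps" where "pexp h = ev h (fps_exp 1)"

lemma cf_pexp: "ordge 1 h \<Longrightarrow> cf (pexp h) M' = (\<Sum>k\<le>wt M'. cf (h ^ k) M' / fact k)"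
  by (simp add: pexp_def cf_ev fps_exp_def)

lemma pexp_ln: "ordge 1 g \<Longrightarrow> pexp (ev g (fps_ln 1)) = 1 + g"
  by (simp add: pexp_def ev_compose[symmetric] exp_ln ev_1X)

lemma S_pexp: "good \<sigma> \<Longrightarrow> ordge 1 h \<Longrightarrow> S \<sigma> (pexp h) = pexp (S \<sigma> h)"
  by (simp add: pexp_def S_ev)


lemma cst_mult: "cst p * cst q = cst (p * q)"
  by (rule ps_eqI) (simp add: cf_cst_mult cf_cst)
lemma cst_add: "cst p + cst q = cst (p + q)"
  by (rule ps_eqI) (simp add: cf_cst)
lemma cst_of_nat: "of_nat n = cst (of_nat n)"
  by (induction n) (auto simp: cst_add[symmetric] ps_eqI cf_cst cf_one)

definition Tr :: "nat \<Rightarrow> ps \<Rightarrow> ps" where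
  "Tr w h = (\<Sum>k\<le>w. cst (1 / fact k) * h ^ k)"

lemma pexp_Tr:
  assumes h: "ordge 1 h" shows "eqw w (pexp h) (Tr w h)"
proof (rule eqwI)
  fix M assume M: "wt M \<le> w"
  have "cf (pexp h) M = (\<Sum>k\<le>wt M. cf (h ^ k) M / fact k)" by (rule cf_pexp[OF h])
  also have "\<dots> = (\<Sum>k\<le>w. cf (h ^ k) M / fact k)"
  proof (rule sum.mono_neutral_left)
    show "\<forall>k\<in>{..w} - {..wt M}. cf (h ^ k) M / fact k = 0"
    proof
      fix k assume "k \<in> {..w} - {..wt M}"
      hence "wt M < k * 1" by auto
      thus "cf (h ^ k) M / fact k = 0" using ordge_power[OF h, of k] ordgeD by auto
    qed
  qed (use M in auto)
  also have "\<dots> = cf (Tr w h) M"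
    by (simp add: Tr_def cf_sum cf_cst_mult)
  finally show "cf (pexp h) M = cf (Tr w h) M" .
qed

lemma Tr_add:
  assumes a: "ordge 1 a" and b: "ordge 1 b"
  shows "eqw w (Tr w a * Tr w b) (Tr w (a + b))"
proof -
  define t where "t r s = cst (1 / (fact r * fact s)) * a ^ r * b ^ s" for r s
  have "Tr w (a + b) = (\<Sum>k\<le>w. cst (1 / fact k) * (\<Sum>r\<le>k. of_nat (k choose r) * a ^ r * b ^ (k - r)))"
    by (simp add: Tr_def binomial_ring)
  also have "\<dots> = (\<Sum>k\<le>w. \<Sum>r\<le>k. cst (1 / fact k) * (of_nat (k choose r) * a ^ r * b ^ (k - r)))"
    by (simp add: sum_distrib_left)
  also have "\<dots> = (\<Sum>k\<le>w. \<Sum>r\<le>k. t r (k - r))"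
  proof -
    have key: "cst (1 / fact k) * (of_nat (k choose r) * a ^ r * b ^ (k - r)) = t r (k - r)"
      if "r \<le> k" for k r :: nat
    proof -
      have "(1 / fact k) * (of_nat (k choose r) :: rat) = 1 / (fact r * fact (k - r))"
        using that by (simp add: binomial_fact)
      thus ?thesis
        by (simp add: t_def cst_of_nat mult.assoc[symmetric] cst_mult)
    qed
    show ?thesis by (intro sum.cong refl) (simp add: key)
  qed
  also have "\<dots> = (\<Sum>(r,s)\<in>{(r,s). r + s \<le> w}. t r s)"
    by (rule sum.triangle_reindex_eq[symmetric])
  finally have L: "Tr w (a + b) = (\<Sum>(r,s)\<in>{(r,s). r + s \<le> w}. t r s)" .
  have "Tr w a * Tr w b = (\<Sum>r\<le>w. \<Sum>s\<le>w. t r s)"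
    by (simp add: Tr_def t_def sum_product cst_mult ac_simps)
  also have "\<dots> = (\<Sum>(r,s)\<in>{..w} \<times> {..w}. t r s)"
    by (rule sum.cartesian_product)
  also have "{..w} \<times> {..w} = {(r,s). r + s \<le> w} \<union> {(r,s). r \<le> w \<and> s \<le> w \<and> w < r + s}"
    by auto
  also have "(\<Sum>(r,s)\<in>\<dots>. t r s) = (\<Sum>(r,s)\<in>{(r,s). r + s \<le> w}. t r s) +
             (\<Sum>(r,s)\<in>{(r,s). r \<le> w \<and> s \<le> w \<and> w < r + s}. t r s)"
  proof (rule sum.union_disjoint)
    show "finite {(r, s). r + s \<le> w}"
      by (rule finite_subset[of _ "{..w} \<times> {..w}"]) auto
    show "finite {(r, s). r \<le> w \<and> s \<le> w \<and> w < r + s}"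
      by (rule finite_subset[of _ "{..w} \<times> {..w}"]) auto
  qed auto
  finally have R: "Tr w a * Tr w b = Tr w (a + b) + (\<Sum>(r,s)\<in>{(r,s). r \<le> w \<and> s \<le> w \<and> w < r + s}. t r s)"
    using L by simp
  have "ordge (Suc w) (\<Sum>(r,s)\<in>{(r,s). r \<le> w \<and> s \<le> w \<and> w < r + s}. t r s)"
  proof (rule ordge_sum)
    fix p assume "p \<in> {(r,s). r \<le> w \<and> s \<le> w \<and> w < r + s}"
    then obtain r s where p: "p = (r,s)" "w < r + s" by auto
    have "ordge (r * 1 + s * 1) (cst (1 / (fact r * fact s)) * a ^ r * b ^ s)"
      unfolding mult.assoc by (intro ordge_cst_mult ordge_mult ordge_power a b)
    hence "ordge (Suc w) (t r s)" unfolding t_def by (rule ordge_mono) (use p in auto)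
    thus "ordge (Suc w) (case p of (r, s) \<Rightarrow> t r s)" using p by simp
  qed
  thus ?thesis unfolding R eqw_def by simp
qed

lemma pexp_add:
  assumes a: "ordge 1 a" and b: "ordge 1 b"
  shows "pexp (a + b) = pexp a * pexp b"
proof (rule ps_eq_eqw)
  fix w
  have ab: "ordge 1 (a + b)" using a b by (rule ordge_add)
  have "eqw w (pexp (a + b)) (Tr w (a + b))" by (rule pexp_Tr[OF ab])
  moreover have "eqw w (Tr w (a + b)) (Tr w a * Tr w b)" by (rule eqw_sym[OF Tr_add[OF a b]])
  moreover have "eqw w (Tr w a * Tr w b) (pexp a * pexp b)"
    by (intro eqw_mult eqw_sym[OF pexp_Tr] a b)
  ultimately show "eqw w (pexp (a + b)) (pexp a * pexp b)" by (blast intro: eqw_trans)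
qed

lemma pexp_0: "pexp 0 = 1"
proof (rule ps_eqI)
  fix M
  have "cf (pexp 0) M = (\<Sum>k\<le>wt M. cf ((0::ps) ^ k) M / fact k)" by (rule cf_pexp) simp
  also have "\<dots> = (\<Sum>k\<le>wt M. if k = 0 then cf 1 M else 0)"
    by (intro sum.cong refl) (auto simp: power_0_left)
  also have "\<dots> = cf 1 M" by simp
  finally show "cf (pexp 0) M = cf 1 M" .
qed


definition Lam :: ps where
  "Lam = Abs_ps (\<lambda>M. if (\<exists>j. j > 0 \<and> M = {#j#}) then 1 / of_nat (sum_mset M) else 0)"

definition Hs :: ps where
  "Hs = Abs_ps (\<lambda>M. if 0 \<in># M then 0 else 1 / zee M)"

definition Lamw :: "nat \<Rightarrow> ps" where
  "Lamw w = (\<Sum>j\<in>{1..w}. cst (1 / of_nat j) * Var j)"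

lemma ordge_Lam: "ordge 1 Lam"
  by (auto simp: ordge_def Lam_def)

lemma ordge_cVar: "j > 0 \<Longrightarrow> ordge 1 (cst q * Var j)"
  by (rule ordge_cst_mult, rule ordge_mono[OF ordge_Var]) auto

lemma ordge_cVar_Suc: "j > 0 \<Longrightarrow> ordge (Suc 0) (cst q * Var j)"
  using ordge_cVar by simp

lemma ordge_Lamw: "ordge 1 (Lamw w)"
  unfolding Lamw_def by (rule ordge_sum) (auto intro: ordge_cVar ordge_cVar_Suc)

lemma eqw_Lamw: "eqw w Lam (Lamw w)"
proof (rule eqwI)
  fix M assume M: "wt M \<le> w"
  have "cf (Lamw w) M = (\<Sum>j\<in>{1..w}. if M = {#j#} then 1 / of_nat j else 0)"
    by (simp add: Lamw_def cf_sum cf_cst_mult cf_Var if_distrib cong: if_cong)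
  also have "\<dots> = cf Lam M"
  proof (cases "\<exists>j. j > 0 \<and> M = {#j#}")
    case True
    then obtain j where j: "j > 0" "M = {#j#}" by auto
    hence "j \<in> {1..w}" using M by auto
    hence "(\<Sum>i\<in>{1..w}. if M = {#i#} then 1 / of_nat i else 0) = (\<Sum>i\<in>{1..w}. if i = j then 1 / of_nat j else (0::rat))"
      using j by (intro sum.cong refl) auto
    also have "\<dots> = 1 / of_nat j" using \<open>j \<in> {1..w}\<close> by simp
    finally show ?thesis using j by (simp add: Lam_def)
  next
    case False
    have "\<And>i. i \<in> {1..w} \<Longrightarrow> i > 0" by auto
    hence "\<And>i. i \<in> {1..w} \<Longrightarrow> M \<noteq> {#i#}" using False by blast
    moreover have "cf Lam M = 0" unfolding Lam_def cf_Abs by (rule if_not_P[OF False])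
    ultimately show ?thesis by simp
  qed
  finally show "cf Lam M = cf (Lamw w) M" by simp
qed

lemma eqw_Tr: "eqw w f g \<Longrightarrow> eqw w (Tr n f) (Tr n g)"
  unfolding Tr_def by (intro eqw_sum eqw_mult eqw_refl eqw_power)

lemma eqw_pexp: assumes "ordge 1 f" "ordge 1 g" "eqw w f g" shows "eqw w (pexp f) (pexp g)"
proof -
  have "eqw w (pexp f) (Tr w f)" by (rule pexp_Tr[OF assms(1)])
  moreover have "eqw w (Tr w f) (Tr w g)" by (rule eqw_Tr[OF assms(3)])
  moreover have "eqw w (Tr w g) (pexp g)" by (rule eqw_sym[OF pexp_Tr[OF assms(2)]])
  ultimately show ?thesis by (blast intro: eqw_trans)
qed

lemma pexp_sum:
  assumes "finite A" "\<And>j. j \<in> A \<Longrightarrow> ordge 1 (F j)"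
  shows "pexp (sum F A) = (\<Prod>j\<in>A. pexp (F j))"
  using assms
proof (induction A rule: finite_induct)
  case empty
  then show ?case by (simp add: pexp_0)
next
  case (insert x A)
  have "pexp (sum F (insert x A)) = pexp (F x + sum F A)" using insert by simp
  also have "\<dots> = pexp (F x) * pexp (sum F A)"
    by (rule pexp_add) (use insert in \<open>auto intro: ordge_sum\<close>)
  finally show ?case using insert by simp
qed

definition Ej :: "nat \<Rightarrow> ps" where "Ej j = pexp (cst (1 / of_nat j) * Var j)"

lemma cst_power: "cst q ^ k = cst (q ^ k)"
  by (induction k) (auto simp: cst_mult)

lemma cf_Ej:
  assumes j: "j > 0"
  shows "cf (Ej j) M = (if set_mset M \<subseteq> {j} then (1 / of_nat j) ^ size M / fact (size M) else 0)"
proof -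
  have "cf (Ej j) M = (\<Sum>k\<le>wt M. cf ((cst (1 / of_nat j) * Var j) ^ k) M / fact k)"
    unfolding Ej_def by (rule cf_pexp[OF ordge_cVar[OF j]])
  also have "\<dots> = (\<Sum>k\<le>wt M. if M = replicate_mset k j then (1 / of_nat j) ^ k / fact k else 0)"
    by (intro sum.cong refl) (simp add: power_mult_distrib cst_power cf_cst_mult cf_Var_power)
  also have "\<dots> = (if set_mset M \<subseteq> {j} then (1 / of_nat j) ^ size M / fact (size M) else 0)"
  proof (cases "set_mset M \<subseteq> {j}")
    case True
    hence M: "M = replicate_mset (size M) j" by (simp add: set_sub_single)
    have "size M \<le> wt M" by (rule size_le_wt)
    have "(\<Sum>k\<le>wt M. if M = replicate_mset k j then (1 / of_nat j) ^ k / fact k else (0::rat)) =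
          (\<Sum>k\<le>wt M. if k = size M then (1 / of_nat j) ^ k / fact k else 0)"
      by (intro sum.cong refl) (metis M size_replicate_mset)
    also have "\<dots> = (1 / of_nat j) ^ size M / fact (size M)" using \<open>size M \<le> wt M\<close> by simp
    finally show ?thesis using True by simp
  next
    case False
    hence "\<And>k. M \<noteq> replicate_mset k j" by (metis set_sub_single size_replicate_mset)
    thus ?thesis using False by simp
  qed
  finally show ?thesis .
qed

lemma sum_single_nz:
  assumes "finite A" "a \<in> A" "\<And>x. x \<in> A \<Longrightarrow> x \<noteq> a \<Longrightarrow> f x = (0::rat)"
  shows "sum f A = f a"
proof -
  have "sum f A = f a + sum f (A - {a})" using assms by (simp add: sum.remove)
  also have "sum f (A - {a}) = 0" using assms by (intro sum.neutral) auto
  finally show ?thesis by simp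
qed

definition ewt :: "nat \<Rightarrow> nat \<Rightarrow> rat" where
  "ewt j c = (1 / of_nat j) ^ c / fact c"

lemma cf_prod_Ej:
  assumes "finite A" "0 \<notin> A"
  shows "cf (\<Prod>j\<in>A. Ej j) M = (if set_mset M \<subseteq> A then (\<Prod>j\<in>A. ewt j (count M j)) else 0)"
  using assms
proof (induction A arbitrary: M rule: finite_induct)
  case empty
  then show ?case by (auto simp: cf_one)
next
  case (insert v A)
  have v: "v > 0" using insert by auto
  have IH: "\<And>M. cf (\<Prod>j\<in>A. Ej j) M = (if set_mset M \<subseteq> A then (\<Prod>j\<in>A. ewt j (count M j)) else 0)"
    using insert by auto
  have "cf (\<Prod>j\<in>insert v A. Ej j) M = cf (Ej v * (\<Prod>j\<in>A. Ej j)) M" using insert by simp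
  also have "\<dots> = (\<Sum>B\<in>{B. B \<subseteq># M}. cf (Ej v) B * cf (\<Prod>j\<in>A. Ej j) (M - B))"
    by (rule cf_times)
  also have "\<dots> = (if set_mset M \<subseteq> insert v A then (\<Prod>j\<in>insert v A. ewt j (count M j)) else 0)"
  proof (cases "set_mset M \<subseteq> insert v A")
    case True
    define B0 where "B0 = replicate_mset (count M v) v"
    have B0M: "B0 \<subseteq># M" by (auto simp: B0_def subseteq_mset_def)
    have cnt: "count (M - B0) j = (if j = v then 0 else count M j)" for j
      by (simp add: B0_def)
    have setd: "set_mset (M - B0) \<subseteq> A"
    proof
      fix x assume "x \<in># M - B0"
      hence "count (M - B0) x > 0" by (metis count_greater_zero_iff)
      hence "x \<noteq> v" using cnt[of x] by (auto split: if_splits)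
      moreover have "x \<in># M" using \<open>x \<in># M - B0\<close> by (rule in_diffD)
      ultimately
      show "x \<in> A" using True by auto
    qed
    have "(\<Sum>B\<in>{B. B \<subseteq># M}. cf (Ej v) B * cf (\<Prod>j\<in>A. Ej j) (M - B)) =
          cf (Ej v) B0 * cf (\<Prod>j\<in>A. Ej j) (M - B0)"
    proof (rule sum_single_nz)
      show "finite {B. B \<subseteq># M}" by (rule finite_sub)
      show "B0 \<in> {B. B \<subseteq># M}" using B0M by simp
      fix B assume B: "B \<in> {B. B \<subseteq># M}" "B \<noteq> B0"
      show "cf (Ej v) B * cf (\<Prod>j\<in>A. Ej j) (M - B) = 0"
      proof (cases "set_mset B \<subseteq> {v} \<and> set_mset (M - B) \<subseteq> A")
        case True
        hence sB: "set_mset B \<subseteq> {v}" and sMB: "set_mset (M - B) \<subseteq> A" by auto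
        have "B = B0"
        proof (rule multiset_eqI)
          fix x
          show "count B x = count B0 x"
          proof (cases "x = v")
            case True
            hence "count (M - B) x = 0" using sMB insert(2)
              by (metis count_eq_zero_iff subsetD)
            hence "count B x = count M x" using B(1) True
              by (simp add: subseteq_mset_def) (metis le_antisym diff_is_0_eq)
            thus ?thesis using True by (simp add: B0_def)
          next
            case False
            hence "count B x = 0" using sB by (metis count_eq_zero_iff singletonD subsetD)
            thus ?thesis using False by (simp add: B0_def)
          qed
        qed
        thus ?thesis using B by simp
      next
        case False
        thus ?thesis by (auto simp: cf_Ej[OF v] IH)
      qed
    qed
    also have "\<dots> = ewt v (count M v) * (\<Prod>j\<in>A. ewt j (count M j))"
    proof -
      have "cf (Ej v) B0 = ewt v (count M v)"
        by (simp add: cf_Ej[OF v] B0_def ewt_def)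
      moreover have "(\<Prod>j\<in>A. ewt j (count (M - B0) j)) = (\<Prod>j\<in>A. ewt j (count M j))"
      proof (intro prod.cong refl)
        fix x assume "x \<in> A"
        hence "x \<noteq> v" using insert(2) by auto
        thus "ewt x (count (M - B0) x) = ewt x (count M x)" using cnt[of x] by (simp del: count_diff)
      qed
      ultimately show ?thesis using setd by (simp add: IH)
    qed
    finally show ?thesis using True insert by simp
  next
    case False
    have "cf (Ej v) B * cf (\<Prod>j\<in>A. Ej j) (M - B) = 0" if "B \<subseteq># M" for B
    proof -
      have "\<not> (set_mset B \<subseteq> {v} \<and> set_mset (M - B) \<subseteq> A)"
        using False that by (metis set_mset_union subset_mset.add_diff_inverse Un_mono insert_is_Un)
      thus ?thesis by (auto simp: cf_Ej[OF v] IH)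
    qed
    hence "(\<Sum>B\<in>{B. B \<subseteq># M}. cf (Ej v) B * cf (\<Prod>j\<in>A. Ej j) (M - B)) = 0"
      by (intro sum.neutral) auto
    thus ?thesis using False by simp
  qed
  finally show ?case .
qed

lemma pexp_Lamw: "pexp (Lamw w) = (\<Prod>j\<in>{1..w}. Ej j)"
  unfolding Lamw_def Ej_def by (rule pexp_sum) (auto intro: ordge_cVar ordge_cVar_Suc)

lemma zee_alt: "1 / zee M = (\<Prod>j\<in>set_mset M. ewt j (count M j))"
proof -
  have "1 / zee M = (\<Prod>j\<in>set_mset M. 1 / of_nat (j ^ count M j * fact (count M j)))"
    using prod_dividef[of "\<lambda>_. (1::rat)" "\<lambda>j. of_nat (j ^ count M j * fact (count M j))" "set_mset M"]
    by (simp add: zee_def)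
  also have "\<dots> = (\<Prod>j\<in>set_mset M. ewt j (count M j))"
    by (intro prod.cong refl) (simp add: ewt_def power_one_over of_nat_mult)
  finally show ?thesis .
qed

lemma pexp_Lam: "pexp Lam = Hs"
proof (rule ps_eq_eqw)
  fix w
  have "eqw w (pexp Lam) (pexp (Lamw w))"
    by (rule eqw_pexp[OF ordge_Lam ordge_Lamw eqw_Lamw])
  moreover have "eqw w (pexp (Lamw w)) Hs"
  proof (rule eqwI)
    fix M assume M: "wt M \<le> w"
    have "cf (pexp (Lamw w)) M = (if set_mset M \<subseteq> {1..w} then (\<Prod>j\<in>{1..w}. ewt j (count M j)) else 0)"
      by (simp add: pexp_Lamw cf_prod_Ej)
    also have "\<dots> = cf Hs M"
    proof (cases "0 \<in># M")
      case True
      hence "\<not> set_mset M \<subseteq> {1..w}" by auto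
      thus ?thesis using True by (simp add: Hs_def)
    next
      case False
      have sub: "set_mset M \<subseteq> {1..w}"
      proof
        fix x assume "x \<in># M"
        thus "x \<in> {1..w}" using False elem_le_wt[of x M] M by (cases "x = 0") auto
      qed
      have "(\<Prod>j\<in>{1..w}. ewt j (count M j)) = (\<Prod>j\<in>set_mset M. ewt j (count M j))"
        by (rule prod.mono_neutral_right) (use sub in \<open>auto simp: ewt_def not_in_iff\<close>)
      thus ?thesis using sub False by (simp add: Hs_def zee_alt)
    qed
    finally show "cf (pexp (Lamw w)) M = cf Hs M" .
  qed
  ultimately show "eqw w (pexp Lam) Hs" by (rule eqw_trans)
qed


lemma sf_pf_mset:
  fixes d :: nat
  assumes "squarefree d"
  shows "prime_factorization d = mset_set (prime_factors d)"
proof (rule multiset_eqI)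
  fix p
  have d0: "d \<noteq> 0" using assms by (cases "d = 0") auto
  have le: "count (prime_factorization d) p \<le> 1"
    using assms d0 by (auto simp: squarefree_factorial_semiring'' count_prime_factorization)
  show "count (prime_factorization d) p = count (mset_set (prime_factors d)) p"
  proof (cases "p \<in># prime_factorization d")
    case True
    hence "count (prime_factorization d) p > 0" by simp
    hence "count (prime_factorization d) p = 1" using le by linarith
    thus ?thesis using True by (simp add: count_mset_set)
  next
    case False
    thus ?thesis by (simp add: not_in_iff count_mset_set)
  qed
qed

lemma sf_prod_pf:
  fixes d :: nat
  assumes "squarefree d"
  shows "\<Prod>(prime_factors d) = d"
proof -
  have "d \<noteq> 0" using assms by (cases "d = 0") auto
  hence "prod_mset (prime_factorization d) = d" by (simp add: prod_mset_prime_factorization)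
  thus ?thesis using sf_pf_mset[OF assms] by (simp add: prod_unfold_prod_mset)
qed

lemma pf_prod_primes:
  fixes S :: "nat set"
  assumes "finite S" "\<And>p. p \<in> S \<Longrightarrow> prime p"
  shows "prime_factorization (\<Prod>S) = mset_set S"
proof -
  have "\<Prod>S = prod_mset (mset_set S)" by (simp add: prod_unfold_prod_mset)
  moreover have "prime_factorization (prod_mset (mset_set S)) = mset_set S"
    by (rule prime_factorization_prod_mset_primes) (use assms in auto)
  ultimately show ?thesis by simp
qed

lemma moebius_sum:
  fixes q :: nat
  assumes q: "q > 0"
  shows "(\<Sum>d\<in>{d. d dvd q}. (of_int (moebius d) :: rat)) = (if q = 1 then 1 else 0)"
proof -
  define P where "P = prime_factors q"
  have finP: "finite P" by (simp add: P_def)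
  have "(\<Sum>d\<in>{d. d dvd q}. (of_int (moebius d) :: rat)) =
        (\<Sum>d\<in>{d. d dvd q \<and> squarefree d}. (-1) ^ card (prime_factors d))"
  proof (rule sum.mono_neutral_cong_right)
    show "finite {d. d dvd q}" using q by simp
    show "\<forall>i\<in>{d. d dvd q} - {d. d dvd q \<and> squarefree d}. (of_int (moebius i) :: rat) = 0"
      by (auto simp: moebius_def)
    show "\<And>x. x \<in> {d. d dvd q \<and> squarefree d} \<Longrightarrow> (of_int (moebius x) :: rat) = (- 1) ^ card (prime_factors x)"
      by (auto simp: moebius_def intro: Nat.gr0I)
  qed auto
  also have "\<dots> = (\<Sum>S\<in>Pow P. (-1) ^ card S)"
  proof (rule sum.reindex_bij_witness[where j = "\<lambda>d. prime_factors d" and i = "\<lambda>S. \<Prod>S"])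
    fix d assume d: "d \<in> {d. d dvd q \<and> squarefree d}"
    show "\<Prod>(prime_factors d) = d" using d sf_prod_pf by auto
    show "prime_factors d \<in> Pow P" using d q dvd_prime_factors[of q d] by (auto simp: P_def)
    show "(-1) ^ card (prime_factors d) = ((-1) ^ card (prime_factors d) :: rat)" ..
  next
    fix S assume S: "S \<in> Pow P"
    have finS: "finite S" using S finP by (auto intro: finite_subset)
    have pr: "\<And>p. p \<in> S \<Longrightarrow> prime p" using S by (auto simp: P_def)
    have pf: "prime_factorization (\<Prod>S) = mset_set S" by (rule pf_prod_primes[OF finS pr])
    show "prime_factors (\<Prod>S) = S" using pf finS by simp
    have nz: "\<Prod>S \<noteq> 0" using pr by (metis finS prod_zero_iff not_prime_0)
    have "multiplicity p (\<Prod>S) \<le> 1" if "prime p" for p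
    proof -
      have "multiplicity p (\<Prod>S) = count (prime_factorization (\<Prod>S)) p"
        using that by (simp add: count_prime_factorization)
      also have "\<dots> = count (mset_set S) p" by (simp add: pf)
      also have "\<dots> \<le> 1" using finS by (cases "p \<in> S") (auto simp: count_mset_set)
      finally show ?thesis .
    qed
    hence "squarefree (\<Prod>S)" using nz by (simp add: squarefree_factorial_semiring'')
    moreover have "\<Prod>S dvd q"
    proof (rule prime_factorization_subset_imp_dvd[OF nz])
      show "prime_factorization (\<Prod>S) \<subseteq># prime_factorization q"
        unfolding pf subseteq_mset_def
      proof
        fix p
        show "count (mset_set S) p \<le> count (prime_factorization q) p"
        proof (cases "p \<in> S")
          case True
          hence "p \<in># prime_factorization q" using S by (auto simp: P_def)
          hence "count (prime_factorization q) p \<ge> 1" by (simp add: Suc_le_eq)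
          thus ?thesis using True finS by (simp add: count_mset_set)
        qed (simp add: count_mset_set finS)
      qed
    qed
    ultimately show "\<Prod>S \<in> {d. d dvd q \<and> squarefree d}" by simp
  qed
  also have "\<dots> = (\<Prod>x\<in>P. (1::rat) - 1)"
    using prod_diff_conv_sum[OF finP, of "\<lambda>_. 1::rat" "\<lambda>_. 1"] by simp
  also have "\<dots> = (if q = 1 then 1 else 0)"
  proof (cases "q = 1")
    case True
    hence "P = {}" by (simp add: P_def)
    thus ?thesis using True by simp
  next
    case False
    obtain p where "prime p" "p dvd q" using prime_factor_nat[of q] False by blast
    hence "P \<noteq> {}" using q by (auto simp: P_def prime_factors_dvd)
    thus ?thesis using False finP by (simp add: card_gt_0_iff)
  qed
  finally show ?thesis .
qed


lemma max1: "0 < i \<Longrightarrow> max i (1::nat) = i" by simp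

lemma ordge_Var_pos: "v > 0 \<Longrightarrow> ordge 1 (Var v)"
  using ordge_Var[of v] ordge_mono by fastforce

lemma ordge_Var_self: "v > 0 \<Longrightarrow> ordge v (Var v)"
  using ordge_Var[of v] by (simp only: max1)

lemma sf_add_br: "sf_add f g = cf (Abs_ps f + Abs_ps g)"
  by (simp add: fun_eq_iff sf_add_def plus_ps_def)

lemma Abs_cf[simp]: "Abs_ps (cf x) = x" by (rule cf_inverse)

lemma sf_mult_br: "sf_mult f g = cf (Abs_ps f * Abs_ps g)"
  by (simp add: times_ps_def)

lemma sf_pow_br: "sf_pow f n = cf (Abs_ps f ^ n)"
  by (induction n) (auto simp: one_ps_def sf_mult_br)

lemma subst_br: "subst \<sigma> f = cf (S (\<lambda>i. Abs_ps (\<sigma> i)) (Abs_ps f))"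
  by (simp add: S_def)

definition pk :: "nat \<Rightarrow> nat \<Rightarrow> ps" where
  "pk k i = (if i = 0 then Var 0 ^ k else Var (k * i))"

lemma sgood_mono: "sgood c \<sigma> \<Longrightarrow> c' \<le> c \<Longrightarrow> sgood c' \<sigma>"
  by (auto simp: sgood_def intro: ordge_mono)

lemma sgood_pk: "sgood k (pk k)"
  unfolding sgood_def
proof
  fix i
  show "ordge (k * max i 1) (pk k i)"
  proof (cases "i = 0")
    case True
    have "ordge (k * 1) (Var 0 ^ k)" by (rule ordge_power) (use ordge_Var[of 0] in simp)
    thus ?thesis using True by (simp add: pk_def)
  next
    case False
    have "ordge (max (k * i) 1) (Var (k * i))" by (rule ordge_Var)
    hence "ordge (k * i) (Var (k * i))" by (rule ordge_mono) simp
    thus ?thesis using False by (simp add: pk_def max1)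
  qed
qed

lemma good_pk: "k > 0 \<Longrightarrow> good (pk k)"
  by (rule sgood_mono[OF sgood_pk]) simp

lemma pleth_p_br: "pleth_p k g = cf (S (pk k) (Abs_ps g))"
proof -
  have "(\<lambda>i. Abs_ps (if i = 0 then sf_pow (sf_var 0) k else sf_var (k * i))) = pk k"
    by (auto simp: pk_def sf_pow_br Var_def[symmetric] fun_eq_iff)
  thus ?thesis by (simp add: pleth_p_def subst_br)
qed

definition pl :: "ps \<Rightarrow> nat \<Rightarrow> ps" where
  "pl G i = (if i = 0 then Var 0 else S (pk i) G)"

lemma sf_pleth_br: "sf_pleth f g = cf (S (pl (Abs_ps g)) (Abs_ps f))"
proof -
  have "(\<lambda>i. Abs_ps (if i = 0 then sf_var 0 else pleth_p i g)) = pl (Abs_ps g)"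
    by (auto simp: pl_def pleth_p_br Var_def fun_eq_iff)
  thus ?thesis by (simp add: sf_pleth_def subst_br)
qed

lemma good_pl: assumes "ordge 1 G" shows "good (pl G)"
  unfolding sgood_def
proof
  fix i
  show "ordge (1 * max i 1) (pl G i)"
  proof (cases "i = 0")
    case True thus ?thesis using ordge_Var[of 0] by (simp add: pl_def)
  next
    case False
    have "ordge (i * 1) (S (pk i) G)" by (rule S_ordge[OF sgood_pk assms])
    thus ?thesis using False by (simp add: pl_def max1)
  qed
qed

definition dl :: "nat \<Rightarrow> ps" where
  "dl i = (if i = 0 then Var 0 else Var 0 ^ i + Var i)"

lemma sf_invDelta_br: "sf_invDelta f = cf (S dl (Abs_ps f))"
proof -
  have "(\<lambda>i. Abs_ps (if i = 0 then sf_var 0 else sf_add (sf_pow (sf_var 0) i) (sf_var i))) = dl"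
    by (auto simp: dl_def sf_add_br sf_pow_br Var_def fun_eq_iff)
  thus ?thesis by (simp add: sf_invDelta_def subst_br)
qed

lemma good_dl: "good dl"
  unfolding sgood_def
proof
  fix i
  show "ordge (1 * max i 1) (dl i)"
  proof (cases "i = 0")
    case True thus ?thesis using ordge_Var[of 0] by (simp add: dl_def)
  next
    case False
    have "ordge (i * 1) (Var 0 ^ i)" by (rule ordge_power) (use ordge_Var[of 0] in simp)
    moreover have "ordge i (Var i)" using ordge_Var_self[of i] False by simp
    ultimately have "ordge i (Var 0 ^ i + Var i)" by (simp add: ordge_add)
    thus ?thesis using False by (simp add: dl_def max1)
  qed
qed

definition tt :: "nat \<Rightarrow> ps" where
  "tt i = (if i = 0 then Var 0 else Abs_ps (T_img i))"

lemma sf_T_br: "sf_T f = cf (S tt (Abs_ps f))"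
proof -
  have "(\<lambda>i. Abs_ps (if i = 0 then sf_var 0 else T_img i)) = tt"
    by (auto simp: tt_def Var_def fun_eq_iff)
  thus ?thesis by (simp add: sf_T_def subst_br)
qed

lemma S_pk_Var: "k > 0 \<Longrightarrow> j > 0 \<Longrightarrow> S (pk k) (Var j) = Var (k * j)"
  by (simp add: S_Var[OF good_pk] pk_def)

lemma pl_Var1: "pl (Var 1) = Var"
  by (auto simp: fun_eq_iff pl_def S_pk_Var)

lemma sum_mset_wt: "0 \<notin># M \<Longrightarrow> wt M = sum_mset M"
  by (induction M) auto

lemma zee_empty: "zee {#} = 1" by (simp add: zee_def)

lemma Exp_br: "Abs_ps (sf_Exp (sf_var 1)) = Hs - 1"
proof (rule ps_eqI)
  fix M
  have h: "sf_pleth (sf_h n) (sf_var 1) = sf_h n" for n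
    by (simp only: sf_pleth_br Var_def[symmetric] pl_Var1 S_id cf_Abs)
  have "cf (Abs_ps (sf_Exp (sf_var 1))) M = (\<Sum>n\<in>{1..wt M}. sf_h n M)"
    by (simp add: sf_Exp_def h del: One_nat_def)
  also have "\<dots> = cf (Hs - 1) M"
  proof (cases "0 \<in># M")
    case True
    thus ?thesis by (auto simp: sf_h_def Hs_def cf_one)
  next
    case False
    show ?thesis
    proof (cases "M = {#}")
      case True
      thus ?thesis by (simp add: Hs_def cf_one zee_empty)
    next
      case ne: False
      have w: "wt M = sum_mset M" using False by (rule sum_mset_wt)
      have "wt M > 0" using ne using wt_eq_0[of M] by linarith
      hence "(\<Sum>n\<in>{1..wt M}. sf_h n M) = (\<Sum>n\<in>{1..wt M}. if n = sum_mset M then 1 / zee M else 0)"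
        by (intro sum.cong refl) (simp add: sf_h_def False)
      also have "\<dots> = 1 / zee M" using \<open>wt M > 0\<close> w by simp
      finally show ?thesis using ne False by (simp add: Hs_def cf_one)
    qed
  qed
  finally show "cf (Abs_ps (sf_Exp (sf_var 1))) M = cf (Hs - 1) M" .
qed

lemma ordge_Hs1: "ordge 1 (Hs - 1)"
  by (auto simp: ordge_def Hs_def cf_one wt_eq_0 zee_empty)

abbreviation Ln :: "rat fps" where "Ln \<equiv> fps_ln 1"

lemma cf_evVar:
  assumes v: "v > 0"
  shows "cf (ev (Var v) F) M = (if set_mset M \<subseteq> {v} then F $ size M else 0)"
proof -
  have o: "ordge 1 (Var v)" using ordge_Var_pos[OF v] .
  have "cf (ev (Var v) F) M = (\<Sum>k\<le>wt M. F $ k * (if M = replicate_mset k v then 1 else 0))"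
    by (simp add: cf_ev[OF o] cf_Var_power)
  also have "\<dots> = (if set_mset M \<subseteq> {v} then F $ size M else 0)"
  proof (cases "set_mset M \<subseteq> {v}")
    case True
    hence M: "M = replicate_mset (size M) v" by (simp add: set_sub_single)
    have "(\<Sum>k\<le>wt M. F $ k * (if M = replicate_mset k v then 1 else 0)) =
          (\<Sum>k\<le>wt M. if k = size M then F $ k else 0)"
      by (intro sum.cong refl) (metis M size_replicate_mset mult_1_right mult_zero_right)
    also have "\<dots> = F $ size M" using size_le_wt[of M] by simp
    finally show ?thesis using True by simp
  next
    case False
    hence "\<And>k. M \<noteq> replicate_mset k v" by (metis set_sub_single size_replicate_mset)
    thus ?thesis using False by simp
  qed
  finally show ?thesis .
qed

lemma sf_log1p_Var:
  assumes v: "v > 0"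
  shows "sf_log1p (cf (Var v)) M = cf (ev (Var v) Ln) M"
proof -
  have "sf_log1p (cf (Var v)) M = (\<Sum>k\<in>{1..wt M}. (-1) ^ (k + 1) / of_nat k * cf (Var v ^ k) M)"
    by (simp add: sf_log1p_def sf_pow_br)
  also have "\<dots> = (\<Sum>k\<le>wt M. Ln $ k * cf (Var v ^ k) M)"
  proof -
    have "(\<Sum>k\<le>wt M. Ln $ k * cf (Var v ^ k) M) = (\<Sum>k\<in>{1..wt M}. Ln $ k * cf (Var v ^ k) M)"
      by (rule sum.mono_neutral_right) (auto simp: fps_ln_nth)
    also have "\<dots> = (\<Sum>k\<in>{1..wt M}. (-1) ^ (k + 1) / of_nat k * cf (Var v ^ k) M)"
    proof (intro sum.cong refl)
      fix k assume k: "k \<in> {1..wt M}"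
      hence "(-1::rat) ^ (k + 1) = (-1) ^ (k - 1)" by (cases k) auto
      thus "Ln $ k * cf (Var v ^ k) M = (-1) ^ (k + 1) / of_nat k * cf (Var v ^ k) M"
        using k by (simp add: fps_ln_nth)
    qed
    finally show ?thesis by simp
  qed
  also have "\<dots> = cf (ev (Var v) Ln) M" by (simp add: cf_ev[OF ordge_Var_pos[OF v]])
  finally show ?thesis .
qed

definition Lw :: "nat \<Rightarrow> ps" where
  "Lw w = (\<Sum>n\<in>{1..w}. cst (of_int (moebius n) / of_nat n) * ev (Var n) Ln)"

lemma Log_br: "eqw w (Abs_ps (sf_Log (sf_add sf_one (sf_var 1)))) (Lw w)"
proof (rule eqwI)
  fix M assume M: "wt M \<le> w"
  have f1: "(\<lambda>M. sf_add sf_one (sf_var 1) M - sf_one M) = cf (Var 1)"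
    by (auto simp: sf_add_def Var_def fun_eq_iff)
  have pn: "pleth_p n (cf (Var 1)) = cf (Var n)" if "n > 0" for n
    using that by (simp add: pleth_p_br S_pk_Var)
  have "cf (Abs_ps (sf_Log (sf_add sf_one (sf_var 1)))) M =
        (\<Sum>n\<in>{1..wt M}. of_int (moebius n) / of_nat n * cf (ev (Var n) Ln) M)"
    unfolding sf_Log_def Let_def f1 cf_Abs by (intro sum.cong refl) (simp add: pn sf_log1p_Var del: One_nat_def)
  also have "\<dots> = (\<Sum>n\<in>{1..w}. of_int (moebius n) / of_nat n * cf (ev (Var n) Ln) M)"
  proof (rule sum.mono_neutral_left)
    show "\<forall>n\<in>{1..w} - {1..wt M}. of_int (moebius n) / of_nat n * cf (ev (Var n) Ln) M = 0"
    proof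
      fix n assume n: "n \<in> {1..w} - {1..wt M}"
      hence "n > wt M" "n > 0" by auto
      show "of_int (moebius n) / of_nat n * cf (ev (Var n) Ln) M = 0"
      proof (cases "set_mset M \<subseteq> {n} \<and> M \<noteq> {#}")
        case True
        then obtain x where "x \<in># M" by (meson multiset_nonemptyE)
        hence "x = n" "x \<le> wt M" using True elem_le_wt by auto
        thus ?thesis using \<open>n > wt M\<close> by simp
      next
        case False
        thus ?thesis using \<open>n > 0\<close> by (auto simp: cf_evVar)
      qed
    qed
  qed (use M in auto)
  also have "\<dots> = cf (Lw w) M" by (simp add: Lw_def cf_sum cf_cst_mult)
  finally show "cf (Abs_ps (sf_Log (sf_add sf_one (sf_var 1)))) M = cf (Lw w) M" .
qed

lemma ordge_Log: "ordge 1 (Abs_ps (sf_Log (sf_add sf_one (sf_var 1))))"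
  unfolding ordge_def
proof (intro allI impI)
  fix M :: "nat multiset" assume "wt M < 1"
  hence M: "M = {#}" by (simp add: wt_eq_0)
  have "cf (Abs_ps (sf_Log (sf_add sf_one (sf_var 1)))) M = cf (Lw 0) M"
    using eqwD[OF Log_br[of 0], of M] M by simp
  thus "cf (Abs_ps (sf_Log (sf_add sf_one (sf_var 1)))) M = 0" by (simp add: Lw_def)
qed


lemma AR:
  fixes i v w :: nat
  assumes i: "i > 0" and vw: "v \<le> w"
  shows "(\<Sum>j\<in>{1..w}. \<Sum>n\<in>{1..w}. if i * j * n = v then (of_int (moebius n) :: rat) / (of_nat j * of_nat n) else 0)
         = (if v = i then 1 else 0)"
proof (cases "i dvd v \<and> v > 0")
  case False
  have "\<And>j n. j \<in> {1..w} \<Longrightarrow> n \<in> {1..w} \<Longrightarrow> i * j * n \<noteq> v"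
  proof
    fix j n assume jn: "j \<in> {1..w}" "n \<in> {1..w}" "i * j * n = v"
    hence "i dvd v" "v > 0" using i by (auto simp: mult.assoc)
    thus False using False by simp
  qed
  hence "(\<Sum>j\<in>{1..w}. \<Sum>n\<in>{1..w}. if i * j * n = v then (of_int (moebius n) :: rat) / (of_nat j * of_nat n) else 0) = 0"
    by (intro sum.neutral ballI) simp
  moreover have "v \<noteq> i" using False i by auto
  ultimately show ?thesis by simp
next
  case True
  then obtain q where q: "v = i * q" by (auto elim: dvdE)
  have q0: "q > 0" using q True by (auto intro: Nat.gr0I)
  have "q dvd v" using q by simp
  hence "q \<le> v" using True by (intro dvd_imp_le) auto
  hence qw: "q \<le> w" using vw by linarith
  have "(\<Sum>j\<in>{1..w}. \<Sum>n\<in>{1..w}. if i * j * n = v then (of_int (moebius n) :: rat) / (of_nat j * of_nat n) else 0)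
      = (\<Sum>n\<in>{1..w}. \<Sum>j\<in>{1..w}. if j * n = q then (of_int (moebius n) :: rat) / of_nat q else 0)"
  proof -
    have "(\<Sum>j\<in>{1..w}. \<Sum>n\<in>{1..w}. if i * j * n = v then (of_int (moebius n) :: rat) / (of_nat j * of_nat n) else 0)
        = (\<Sum>j\<in>{1..w}. \<Sum>n\<in>{1..w}. if j * n = q then (of_int (moebius n) :: rat) / of_nat q else 0)"
    proof (intro sum.cong refl)
      fix j n :: nat
      have "(i * j * n = v) = (j * n = q)" using q i by (simp add: mult.assoc)
      moreover have "j * n = q \<Longrightarrow> (of_nat j * of_nat n :: rat) = of_nat q" by (metis of_nat_mult)
      ultimately show "(if i * j * n = v then (of_int (moebius n) :: rat) / (of_nat j * of_nat n) else 0) =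
                       (if j * n = q then of_int (moebius n) / of_nat q else 0)" by auto
    qed
    also have "\<dots> = (\<Sum>n\<in>{1..w}. \<Sum>j\<in>{1..w}. if j * n = q then (of_int (moebius n) :: rat) / of_nat q else 0)"
      by (rule sum.swap)
    finally show ?thesis .
  qed
  also have "\<dots> = (\<Sum>n\<in>{1..w}. if n dvd q then (of_int (moebius n) :: rat) / of_nat q else 0)"
  proof (intro sum.cong refl)
    fix n assume n: "n \<in> {1..w}"
    show "(\<Sum>j\<in>{1..w}. if j * n = q then (of_int (moebius n) :: rat) / of_nat q else 0) =
          (if n dvd q then of_int (moebius n) / of_nat q else 0)"
    proof (cases "n dvd q")
      case True
      then obtain j0 where j0: "q = n * j0" by (auto elim: dvdE)
      have "j0 > 0" using q0 j0 by (auto intro: Nat.gr0I)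
      moreover have "j0 \<le> q" using j0 n by simp
      ultimately have "j0 \<in> {1..w}" using qw by auto
      have "(\<Sum>j\<in>{1..w}. if j * n = q then (of_int (moebius n) :: rat) / of_nat q else 0) =
            (\<Sum>j\<in>{1..w}. if j = j0 then (of_int (moebius n) :: rat) / of_nat q else 0)"
        using n j0 by (intro sum.cong refl) (auto simp: mult.commute)
      also have "\<dots> = of_int (moebius n) / of_nat q" using \<open>j0 \<in> {1..w}\<close> by simp
      finally show ?thesis using True by simp
    next
      case False
      hence "\<And>j. j * n \<noteq> q" by auto
      thus ?thesis using False by simp
    qed
  qed
  also have "\<dots> = (\<Sum>n\<in>{d. d dvd q}. (of_int (moebius n) :: rat) / of_nat q)"
  proof (rule sum.mono_neutral_cong_right)
    show "{d. d dvd q} \<subseteq> {1..w}"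
    proof
      fix x assume "x \<in> {d. d dvd q}"
      hence x: "x dvd q" by simp
      hence "x \<le> q" using q0 by (rule dvd_imp_le)
      moreover have "x \<noteq> 0" using x q0 by (auto intro: Nat.gr0I)
      ultimately show "x \<in> {1..w}" using qw by auto
    qed
  qed auto
  also have "\<dots> = (\<Sum>n\<in>{d. d dvd q}. (of_int (moebius n) :: rat)) / of_nat q"
    by (simp add: sum_divide_distrib)
  also have "\<dots> = (if q = 1 then 1 else 0)"
    by (simp add: moebius_sum[OF q0])
  also have "\<dots> = (if v = i then 1 else 0)" using q i by auto
  finally show ?thesis .
qed

abbreviation LL :: ps where "LL \<equiv> Abs_ps (sf_Log (sf_add sf_one (sf_var 1)))"

lemma S_pk_Lw:
  assumes m: "m > 0"
  shows "S (pk m) (Lw w) = (\<Sum>n\<in>{1..w}. cst (of_int (moebius n) / of_nat n) * ev (Var (m * n)) Ln)"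
proof -
  have "S (pk m) (Lw w) = (\<Sum>n\<in>{1..w}. cst (of_int (moebius n) / of_nat n) * ev (S (pk m) (Var n)) Ln)"
    unfolding Lw_def S_sum S_cst_mult
    by (intro sum.cong refl) (simp add: S_ev[OF good_pk[OF m] ordge_Var_pos])
  also have "\<dots> = (\<Sum>n\<in>{1..w}. cst (of_int (moebius n) / of_nat n) * ev (Var (m * n)) Ln)"
    by (intro sum.cong refl) (simp add: S_pk_Var m)
  finally show ?thesis .
qed

lemma B_eq:
  assumes i: "i > 0"
  shows "eqw w (\<Sum>j\<in>{1..w}. cst (1 / of_nat j) * S (pk (i * j)) LL) (ev (Var i) Ln)"
proof -
  define D where "D = (\<Sum>j\<in>{1..w}. cst (1 / of_nat j) *
                        (\<Sum>n\<in>{1..w}. cst (of_int (moebius n) / of_nat n) * ev (Var (i * j * n)) Ln))"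
  have "eqw w (\<Sum>j\<in>{1..w}. cst (1 / of_nat j) * S (pk (i * j)) LL) D"
    unfolding D_def
  proof (intro eqw_sum eqw_mult eqw_refl)
    fix j assume j: "j \<in> {1..w}"
    hence ij: "i * j > 0" using i by auto
    have "eqw w (S (pk (i * j)) LL) (S (pk (i * j)) (Lw w))" by (rule S_eqw[OF Log_br])
    thus "eqw w (S (pk (i * j)) LL) (\<Sum>n\<in>{1..w}. cst (of_int (moebius n) / of_nat n) * ev (Var (i * j * n)) Ln)"
      by (simp add: S_pk_Lw[OF ij])
  qed
  moreover have "eqw w D (ev (Var i) Ln)"
  proof (rule eqwI)
    fix M assume M: "wt M \<le> w"
    have cD: "cf D M = (\<Sum>j\<in>{1..w}. \<Sum>n\<in>{1..w}. 1 / of_nat j * (of_int (moebius n) / of_nat n) *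
                          (if set_mset M \<subseteq> {i * j * n} then Ln $ size M else 0))"
      unfolding D_def cf_sum cf_cst_mult
      by (intro sum.cong refl) (simp add: cf_evVar i sum_distrib_left mult.assoc)
    show "cf D M = cf (ev (Var i) Ln) M"
    proof (cases "M = {#}")
      case True
      show ?thesis unfolding cD using True by (simp add: cf_evVar i)
    next
      case False
      then obtain v0 where v0: "v0 \<in># M" by (meson multiset_nonemptyE)
      have v0w: "v0 \<le> w" using elem_le_wt[OF v0] M by simp
      have sub: "set_mset M \<subseteq> {u} \<Longrightarrow> set_mset M \<subseteq> {v0} \<and> u = v0" for u
        using v0 by auto
      show ?thesis
      proof (cases "set_mset M \<subseteq> {v0}")
        case False
        hence nsub: "\<not> set_mset M \<subseteq> {u}" for u using sub by blast
        show ?thesis unfolding cD by (simp add: cf_evVar i nsub)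
      next
        case True
        have subT: "set_mset M \<subseteq> {u} \<longleftrightarrow> u = v0" for u using sub True by blast
        have "cf D M = (\<Sum>j\<in>{1..w}. \<Sum>n\<in>{1..w}. if i * j * n = v0 then
                          (of_int (moebius n) :: rat) / (of_nat j * of_nat n) else 0) * Ln $ size M"
          unfolding cD sum_distrib_right
          by (intro sum.cong refl) (auto simp: subT)
        also have "\<dots> = (if v0 = i then 1 else 0) * Ln $ size M"
          by (simp only: AR[OF i v0w])
        also have "\<dots> = cf (ev (Var i) Ln) M"
          by (auto simp: cf_evVar i subT)
        finally show ?thesis .
      qed
    qed
  qed
  ultimately show ?thesis by (rule eqw_trans)
qed


lemma neg1_power: "(-1::ps) ^ k = cst ((-1) ^ k)"
proof -
  have "(-1::ps) = cst (-1)" by (rule ps_eqI) (simp add: cf_cst cf_one)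
  thus ?thesis by (simp add: cst_power)
qed

lemma ln_neg:
  assumes "k > 0" shows "Ln $ k * (-1) ^ k = - (1 / (of_nat k :: rat))"
proof -
  obtain m where k: "k = Suc m" using assms by (cases k) auto
  have "(-1::rat) ^ m * (-1) ^ m = 1" by (simp flip: power_mult_distrib)
  hence "(-1::rat) ^ m * (-1) ^ Suc m = -1" by simp
  thus ?thesis by (simp add: fps_ln_nth k field_simps)
qed

lemma ordge_X_pow: "ordge i (Var 0 ^ i)"
  using ordge_power[of 1 "Var 0" i] ordge_Var[of 0] by simp

lemma ordge_negX: "i > 0 \<Longrightarrow> ordge 1 (- (Var 0 ^ i))"
  by (rule ordge_uminus, rule ordge_mono[OF ordge_X_pow]) auto

lemma A_eq:
  assumes i: "i > 0"
  shows "eqw w (\<Sum>j\<in>{1..w}. cst (1 / of_nat j) * Var 0 ^ (i * j)) (- ev (- (Var 0 ^ i)) Ln)"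
proof (rule eqwI)
  fix M assume M: "wt M \<le> w"
  define t where "t k = (if k = 0 then 0 else (1 / of_nat k :: rat) * (if M = replicate_mset (i * k) 0 then 1 else 0))" for k
  have t0: "t k = 0" if "k > wt M" for k
  proof -
    have "M \<noteq> replicate_mset (i * k) 0"
    proof
      assume "M = replicate_mset (i * k) 0"
      hence "wt M = i * k" by simp
      moreover have "k \<le> i * k" using i by simp
      ultimately show False using that by linarith
    qed
    thus ?thesis by (simp add: t_def)
  qed
  have "cf (\<Sum>j\<in>{1..w}. cst (1 / of_nat j) * Var 0 ^ (i * j)) M = (\<Sum>j\<in>{1..w}. t j)"
    by (simp add: cf_sum cf_cst_mult cf_Var_power t_def)
  also have "\<dots> = (\<Sum>j\<le>w. t j)"
    by (rule sum.mono_neutral_left) (auto simp: t_def)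
  also have "\<dots> = (\<Sum>j\<le>wt M. t j)"
    by (rule sum.mono_neutral_right) (use M t0 in auto)
  also have "\<dots> = cf (- ev (- (Var 0 ^ i)) Ln) M"
  proof -
    have "cf (- ev (- (Var 0 ^ i)) Ln) M = - (\<Sum>k\<le>wt M. Ln $ k * cf ((- (Var 0 ^ i)) ^ k) M)"
      by (simp add: cf_ev[OF ordge_negX[OF i]])
    also have "\<dots> = (\<Sum>k\<le>wt M. - (Ln $ k * (-1) ^ k) * (if M = replicate_mset (i * k) 0 then 1 else 0))"
      by (simp add: power_minus[of "Var 0 ^ i"] neg1_power cf_cst_mult power_mult[symmetric]
                    cf_Var_power sum_negf mult.assoc)
    also have "\<dots> = (\<Sum>k\<le>wt M. t k)"
      by (intro sum.cong refl) (auto simp: t_def ln_neg)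
    finally show ?thesis by simp
  qed
  finally show "cf (\<Sum>j\<in>{1..w}. cst (1 / of_nat j) * Var 0 ^ (i * j)) M = cf (- ev (- (Var 0 ^ i)) Ln) M" .
qed

lemma decomp0: "M = filter_mset (\<lambda>j. j \<noteq> 0) M + replicate_mset (count M 0) 0"
  by (rule multiset_eqI) auto

lemma c1:
  assumes i: "i > 0"
  shows "cf (Abs_ps (T_img i) + 1) N =
    (if (filter_mset (\<lambda>j. j \<noteq> 0) N = {#} \<or> filter_mset (\<lambda>j. j \<noteq> 0) N = {#i#}) \<and> i dvd count N 0 then 1 else 0)"
proof -
  define R where "R = filter_mset (\<lambda>j. j \<noteq> 0) N"
  define k where "k = count N 0"
  have N: "N = R + replicate_mset k 0" unfolding R_def k_def by (rule decomp0)
  have "cf (Abs_ps (T_img i) + 1) N = T_img i N + (if N = {#} then 1 else 0)"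
    by (simp add: cf_one)
  also have "\<dots> = (if (R = {#} \<or> R = {#i#}) \<and> i dvd k then 1 else 0)"
  proof (cases "N = {#}")
    case True
    hence "R = {#}" "k = 0" by (auto simp: R_def k_def)
    thus ?thesis using True i by (simp add: T_img_def)
  next
    case False
    have "T_img i N = (if (R = {#} \<or> R = {#i#}) \<and> i dvd k then 1 else 0)"
    proof (cases "R = {#} \<and> i dvd k \<and> \<not> i \<le> k")
      case True
      hence "k = 0" using i by (metis dvd_imp_le gr0I)
      hence "N = {#}" using True N by simp
      thus ?thesis using False by simp
    next
      case nc: False
      show ?thesis unfolding T_img_def Let_def R_def[symmetric] k_def[symmetric] using nc by auto
    qed
    thus ?thesis using False by simp
  qed
  finally show ?thesis by (simp add: R_def k_def)
qed

lemma TT_lemma: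
  assumes i: "i > 0"
  shows "(Abs_ps (T_img i) + 1) * (1 - Var 0 ^ i) = 1 + Var i"
proof (rule ps_eqI)
  fix M :: "nat multiset"
  define Y where "Y = Abs_ps (T_img i) + 1"
  define R where "R = filter_mset (\<lambda>j. j \<noteq> 0) M"
  define k where "k = count M 0"
  have M: "M = R + replicate_mset k 0" unfolding R_def k_def by (rule decomp0)
  have Rnz: "0 \<notin># R" by (simp add: R_def)
  have sub: "replicate_mset i 0 \<subseteq># M \<longleftrightarrow> i \<le> k"
    by (auto simp: subseteq_mset_def k_def split: if_splits)
  have Rd: "filter_mset (\<lambda>j. j \<noteq> 0) (M - replicate_mset i 0) = R"
    by (rule multiset_eqI) (simp add: R_def)
  have kd: "count (M - replicate_mset i 0) 0 = k - i" by (simp add: k_def)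
  have "cf (Y * (1 - Var 0 ^ i)) M = cf Y M - cf (mono (replicate_mset i 0) * Y) M"
    by (simp add: right_diff_distrib Var_power mult.commute)
  also have "\<dots> = (if (R = {#} \<or> R = {#i#}) \<and> i dvd k then 1 else 0) -
                  (if i \<le> k then (if (R = {#} \<or> R = {#i#}) \<and> i dvd (k - i) then 1 else 0) else 0)"
  proof -
    have cY: "cf Y M = (if (R = {#} \<or> R = {#i#}) \<and> i dvd k then 1 else 0)"
      unfolding Y_def R_def k_def by (rule c1[OF i])
    have cY2: "cf Y (M - replicate_mset i 0) = (if (R = {#} \<or> R = {#i#}) \<and> i dvd (k - i) then 1 else 0)"
      using c1[OF i, of "M - replicate_mset i 0"] unfolding Y_def Rd kd .
    show ?thesis using cY cY2 by (simp add: cf_mono_mult sub)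
  qed
  also have "\<dots> = (if (R = {#} \<or> R = {#i#}) \<and> k = 0 then 1 else 0)"
  proof (cases "i \<le> k")
    case True
    have "i dvd k \<longleftrightarrow> i dvd (k - i)"
      using True by (simp add: dvd_minus_self)
    thus ?thesis using True i by auto
  next
    case False
    have "i dvd k \<longleftrightarrow> k = 0" using False by (auto dest: dvd_imp_le intro: gr0I)
    thus ?thesis using False by auto
  qed
  also have "\<dots> = cf (1 + Var i) M"
  proof -
    have e1: "M = {#} \<longleftrightarrow> R = {#} \<and> k = 0" using M by auto
    have e2: "M = {#i#} \<longleftrightarrow> R = {#i#} \<and> k = 0"
    proof
      assume "M = {#i#}"
      thus "R = {#i#} \<and> k = 0" using i by (simp add: R_def k_def)
    next
      assume "R = {#i#} \<and> k = 0"
      thus "M = {#i#}" using M by simp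
    qed
    have "R = {#} \<longrightarrow> R \<noteq> {#i#}" by auto
    thus ?thesis by (auto simp: cf_one cf_Var e1 e2)
  qed
  finally show "cf ((Abs_ps (T_img i) + 1) * (1 - Var 0 ^ i)) M = cf (1 + Var i) M"
    by (simp add: Y_def)
qed


lemma key_i:
  assumes i: "i > 0"
  shows "S (pl LL) (S dl (S (pk i) (Hs - 1))) = Abs_ps (T_img i)"
proof -
  have gL: "good (pl LL)" by (rule good_pl[OF ordge_Log])
  have gp: "good (pk i)" by (rule good_pk[OF i])
  define \<gamma> where "\<gamma> j = S (pl LL) (S dl (pk i j))" for j
  have g\<gamma>: "good \<gamma>" unfolding \<gamma>_def by (rule good_comp[OF gL good_comp[OF good_dl gp]])
  have "S (pl LL) (S dl (S (pk i) (Hs - 1))) = S (pl LL) (S (\<lambda>j. S dl (pk i j)) (Hs - 1))"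
    by (simp only: S_comp[OF good_dl gp])
  also have "\<dots> = S \<gamma> (Hs - 1)"
    unfolding \<gamma>_def by (rule S_comp[OF gL good_comp[OF good_dl gp]])
  finally have st: "S (pl LL) (S dl (S (pk i) (Hs - 1))) = S \<gamma> (Hs - 1)" .
  have \<gamma>j: "\<gamma> j = Var 0 ^ (i * j) + S (pk (i * j)) LL" if j: "j > 0" for j
  proof -
    have ij: "i * j > 0" using i j by simp
    have "S dl (pk i j) = Var 0 ^ (i * j) + Var (i * j)"
      using j ij by (simp add: pk_def S_Var[OF good_dl] dl_def)
    hence "\<gamma> j = S (pl LL) (Var 0) ^ (i * j) + S (pl LL) (Var (i * j))"
      by (simp add: \<gamma>_def S_add S_power[OF gL] del: One_nat_def)
    also have "\<dots> = Var 0 ^ (i * j) + S (pk (i * j)) LL"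
      using ij by (simp add: S_Var[OF gL] pl_def del: One_nat_def)
    finally show ?thesis .
  qed
  define A where "A = - ev (- (Var 0 ^ i)) Ln"
  define B where "B = ev (Var i) Ln"
  have oA: "ordge 1 A" unfolding A_def by (intro ordge_uminus ordge_ev ordge_negX i) simp
  have oB: "ordge 1 B" unfolding B_def by (intro ordge_ev ordge_Var_pos i) simp
  have SL: "S \<gamma> Lam = A + B"
  proof (rule ps_eq_eqw)
    fix w
    have "eqw w (S \<gamma> Lam) (S \<gamma> (Lamw w))" by (rule S_eqw[OF eqw_Lamw])
    moreover have "S \<gamma> (Lamw w) = (\<Sum>j\<in>{1..w}. cst (1 / of_nat j) * Var 0 ^ (i * j)) +
                                  (\<Sum>j\<in>{1..w}. cst (1 / of_nat j) * S (pk (i * j)) LL)"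
    proof -
      have "S \<gamma> (Lamw w) = (\<Sum>j\<in>{1..w}. cst (1 / of_nat j) * \<gamma> j)"
        unfolding Lamw_def S_sum S_cst_mult S_Var[OF g\<gamma>] ..
      also have "\<dots> = (\<Sum>j\<in>{1..w}. cst (1 / of_nat j) * Var 0 ^ (i * j) + cst (1 / of_nat j) * S (pk (i * j)) LL)"
        by (intro sum.cong refl) (simp add: \<gamma>j distrib_left)
      finally show ?thesis by (simp add: sum.distrib)
    qed
    moreover have "eqw w ((\<Sum>j\<in>{1..w}. cst (1 / of_nat j) * Var 0 ^ (i * j)) +
                          (\<Sum>j\<in>{1..w}. cst (1 / of_nat j) * S (pk (i * j)) LL)) (A + B)"
      unfolding A_def B_def by (intro eqw_add A_eq B_eq i)
    ultimately show "eqw w (S \<gamma> Lam) (A + B)" by (metis eqw_trans)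
  qed
  have pB: "pexp B = 1 + Var i" unfolding B_def by (rule pexp_ln[OF ordge_Var_pos[OF i]])
  have pnA: "pexp (- A) = 1 - Var 0 ^ i"
    unfolding A_def using pexp_ln[OF ordge_negX[OF i]] by simp
  have inv: "pexp A * pexp (- A) = 1"
    using pexp_add[OF oA ordge_uminus[OF oA]] by (simp add: pexp_0)
  have "S \<gamma> (Hs - 1) = pexp (S \<gamma> Lam) - 1"
    by (simp add: S_diff pexp_Lam[symmetric] S_pexp[OF g\<gamma> ordge_Lam])
  also have "\<dots> = pexp A * (1 + Var i) - 1"
    by (simp add: SL pexp_add[OF oA oB] pB)
  also have "pexp A * (1 + Var i) = pexp A * ((Abs_ps (T_img i) + 1) * (1 - Var 0 ^ i))"
    by (simp add: TT_lemma[OF i])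
  also have "\<dots> = (Abs_ps (T_img i) + 1) * (pexp A * pexp (- A))"
    by (simp add: pnA ac_simps)
  also have "\<dots> = Abs_ps (T_img i) + 1" by (simp add: inv)
  finally show ?thesis using st by simp
qed

theorem lemma3p6:
  fixes f :: sfx
  assumes "\<forall>M. 0 \<in># M \<longrightarrow> f M = 0"
  shows "sf_T f = sf_pleth (sf_invDelta (sf_pleth f (sf_Exp (sf_var 1))))
                           (sf_Log (sf_add sf_one (sf_var 1)))"
proof -
  define F where "F = Abs_ps f"
  define E where "E = Hs - 1"
  have gE: "good (pl E)" unfolding E_def by (rule good_pl[OF ordge_Hs1])
  have gL: "good (pl LL)" by (rule good_pl[OF ordge_Log])
  have h1: "Abs_ps (sf_pleth f (sf_Exp (sf_var 1))) = S (pl E) F"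
    by (simp only: sf_pleth_br Abs_cf Exp_br E_def F_def)
  have h2: "Abs_ps (sf_invDelta (sf_pleth f (sf_Exp (sf_var 1)))) = S dl (S (pl E) F)"
    by (simp only: sf_invDelta_br Abs_cf h1)
  have "sf_pleth (sf_invDelta (sf_pleth f (sf_Exp (sf_var 1)))) (sf_Log (sf_add sf_one (sf_var 1)))
        = cf (S (pl LL) (S dl (S (pl E) F)))"
    by (simp only: sf_pleth_br[of "sf_invDelta (sf_pleth f (sf_Exp (sf_var 1)))" "sf_Log (sf_add sf_one (sf_var 1))"] h2)
  also have "S (pl LL) (S dl (S (pl E) F)) = S (\<lambda>i. S (pl LL) (S dl (pl E i))) F"
    by (simp only: S_comp[OF good_dl gE] S_comp[OF gL good_comp[OF good_dl gE]])
  also have "\<dots> = S tt F"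
  proof (rule S_cong)
    fix M i assume M: "cf F M \<noteq> 0" and iM: "i \<in># M"
    have "f M \<noteq> 0" using M by (simp add: F_def)
    hence "0 \<notin># M" using assms by blast
    hence "i \<noteq> 0" using iM by metis
    hence "S (pl LL) (S dl (pl E i)) = Abs_ps (T_img i)"
      using key_i[of i] by (simp add: pl_def E_def)
    thus "S (pl LL) (S dl (pl E i)) = tt i" using \<open>i \<noteq> 0\<close> by (simp add: tt_def)
  qed
  also have "cf (S tt F) = sf_T f" by (simp add: sf_T_br F_def)
  finally show ?thesis by simp
qed


end
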